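(* Suppose (A1) $\|\mu_a\|_\infty,\|\widehat\mu_a\|_\infty\le B<\infty$ a.s. for all $a$, (A2) $\max_a\|\widehat\mu_a-\mu_a\|_\infty=o_{\mathbb{P}}(1)$, and that $\mathbb{P}$ satisfies the margin condition with some $\kappa>0$ and $\alpha>0$. For every optimal codebook $C^*\in\mathcal{C}_k^*$, let $\phi_{C^*}(z;\mathbb{P})=\varphi_{C^*}(z;\mathbb{P})-\int\varphi_{C^*}(z;\mathbb{P})\,d\mathbb{P}(z)$, where $\varphi_{C^*}(z;\mathbb{P})=\varphi_{C^*}(z;\eta)$ is evaluated at the true nuisance functions $\eta$ of $\mathbb{P}$. Then $\phi_{C^*}$ is the efficient influence function (in the nonparametric model) for $R(C^* )$.
   Context: $Z=(Y,A,X)\sim\mathbb{P}$, $Y\in\mathbb{R}$, $A\in\mathcal{A}=\{1,\dots,p\}$, $X\in\mathbb{R}^d$. For $a\in\mathcal{A}$: $\mu_a(X)=\mathbb{E}(Y\mid X,A=a)$, $\pi_a(X)=\mathbb{P}(A=a\mid X)$, $\mu=(\mu_1(X),\dots,\mu_p(X))^\top$, $\eta_a=\{\pi_a,\mu_a\}$, $\eta=\{\eta_a\}_{a\in\mathcal{A}}$; $\widehat\mu$ is an estimator of $\mu$. Define $\varphi_{1,a}(Z;\eta_a)=\frac{\mathbb{1}(A=a)}{\pi_a(X)}\{Y-\mu_A(X)\}+\mu_a(X)$, $\varphi_{2,a}(Z;\eta_a)=2\mu_a(X)\frac{\mathbb{1}(A=a)}{\pi_a(X)}\{Y-\mu_A(X)\}+\mu_a^2(X)$,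 and for a codebook $C$, $\varphi_C(Z;\eta)=\sum_{a\in\mathcal{A}}\{\varphi_{2,a}(Z;\eta_a)-2\varphi_{1,a}(Z;\eta_a)[\Pi_C(\mu)]_a+[\Pi_C(\mu)]_a^2\}$, where $[\cdot]_a$ is the $a$-th coordinate. A codebook is $C=\{c_1,\dots,c_k\}\subset\mathbb{R}^p$; $\mathcal{C}_k$ the codebooks of size $k$ in the image of $\mu$; $\Pi_C(x)=\arg\min_{c\in C}\|c-x\|_2^2$; $R(C)=\mathbb{E}\|\mu-\Pi_C(\mu)\|_2^2$; $\mathcal{C}_k^*$ the set of minimizers of $R$. Voronoi cell $V_j(C^* )=\{x:\|x-c_j^*\|_2\le\|x-c_i^*\|_2\ \forall i\neq j\}$; $N_{C^*}(t)=\bigcup_j\{x\in V_j(C^* ):|\,\|x-c_j^*\|_2-\min_{i\ne j}\|x-c_i^*\|_2\,|\le t\}$. Margin condition (radius $\kappa$, rate $\alpha$): for $0\le t\le\kappa$, $\sup_{C^*\in\mathcal{C}_k^*}\mathbb{P}(\mu\in N_{C^*}(t))\lesssim t^\alpha$. *)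

theory Defs
  imports "HOL-Probability.Probability"
begin

text \<open>Observations Z = (Y, A, X) with Y real, A in a finite index type 'a (playing
 the role of {1..p}), X in a Euclidean space 'x (playing the role of R^d).\<close>

definition obsY :: "real \<times> 'a \<times> 'x \<Rightarrow> real" where "obsY z = fst z"
definition obsA :: "real \<times> 'a \<times> 'x \<Rightarrow> 'a" where "obsA z = fst (snd z)"
definition obsX :: "real \<times> 'a \<times> 'x \<Rightarrow> 'x" where "obsX z = snd (snd z)"

definition vecf :: "('a::finite \<Rightarrow> 'x \<Rightarrow> real) \<Rightarrow> 'x \<Rightarrow> real^'a" where
  "vecf m x = (\<chi> a. m a x)"

text \<open>Nearest codebook element (argmin; ties broken by an arbitrary fixed choice).\<close>
definition proj :: "(real^'a::finite) set \<Rightarrow> real^'a \<Rightarrow> real^'a" where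
  "proj C x = (SOME c. c \<in> C \<and> (\<forall>c'\<in>C. norm (x - c) \<le> norm (x - c')))"

text \<open>p is a version of the propensity score pi_a(x) = P(A = a | X = x) under Q.\<close>
definition is_propensity :: "(real \<times> 'a \<times> 'x::euclidean_space) measure \<Rightarrow> ('a \<Rightarrow> 'x \<Rightarrow> real) \<Rightarrow> bool" where
  "is_propensity Q p \<longleftrightarrow> (\<forall>a. p a \<in> borel_measurable borel \<and>
     (\<forall>S\<in>sets borel.
        integrable Q (\<lambda>z. p a (obsX z) * indicator S (obsX z)) \<and>
        measure Q {z\<in>space Q. obsA z = a \<and> obsX z \<in> S}
          = (\<integral>z. p a (obsX z) * indicator S (obsX z) \<partial>Q)))"

text \<open>m is a version of the regression mu_a(x) = E(Y | X = x, A = a) under Q.\<close>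
definition is_regression :: "(real \<times> 'a \<times> 'x::euclidean_space) measure \<Rightarrow> ('a \<Rightarrow> 'x \<Rightarrow> real) \<Rightarrow> bool" where
  "is_regression Q m \<longleftrightarrow> (\<forall>a. m a \<in> borel_measurable borel \<and>
     (\<forall>S\<in>sets borel.
        integrable Q (\<lambda>z. obsY z * indicator {a} (obsA z) * indicator S (obsX z)) \<and>
        integrable Q (\<lambda>z. m a (obsX z) * indicator {a} (obsA z) * indicator S (obsX z)) \<and>
        (\<integral>z. obsY z * indicator {a} (obsA z) * indicator S (obsX z) \<partial>Q)
          = (\<integral>z. m a (obsX z) * indicator {a} (obsA z) * indicator S (obsX z) \<partial>Q)))"

definition risk :: "(real \<times> 'a::finite \<times> 'x) measure \<Rightarrow> ('a \<Rightarrow> 'x \<Rightarrow> real) \<Rightarrow> (real^'a) set \<Rightarrow> real" where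
  "risk Q m C = (\<integral>z. (norm (vecf m (obsX z) - proj C (vecf m (obsX z))))\<^sup>2 \<partial>Q)"

definition psi :: "(real \<times> 'a::finite \<times> 'x::euclidean_space) measure \<Rightarrow> (real^'a) set \<Rightarrow> real" where
  "psi Q C = risk Q (SOME m. is_regression Q m) C"

definition codebooks :: "('a::finite \<Rightarrow> 'x \<Rightarrow> real) \<Rightarrow> nat \<Rightarrow> (real^'a) set set" where
  "codebooks m k = {C. finite C \<and> card C = k \<and> C \<subseteq> range (vecf m)}"

definition opt_codebooks :: "(real \<times> 'a::finite \<times> 'x) measure \<Rightarrow> ('a \<Rightarrow> 'x \<Rightarrow> real) \<Rightarrow> nat \<Rightarrow> (real^'a) set set" where
  "opt_codebooks Q m k = {C \<in> codebooks m k. \<forall>C'\<in>codebooks m k. risk Q m C \<le> risk Q m C'}"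

definition margin_nbhd :: "(real^'a::finite) set \<Rightarrow> real \<Rightarrow> (real^'a) set" where
  "margin_nbhd C t = {x. \<exists>c\<in>C. (\<forall>c'\<in>C. dist x c \<le> dist x c') \<and> C - {c} \<noteq> {} \<and>
      \<bar>dist x c - Min ((\<lambda>c'. dist x c') ` (C - {c}))\<bar> \<le> t}"

definition margin_condition :: "(real \<times> 'a::finite \<times> 'x) measure \<Rightarrow> ('a \<Rightarrow> 'x \<Rightarrow> real) \<Rightarrow> nat \<Rightarrow> real \<Rightarrow> real \<Rightarrow> bool" where
  "margin_condition Q m k \<kappa> \<alpha> \<longleftrightarrow> (\<exists>K. \<forall>t. 0 \<le> t \<and> t \<le> \<kappa> \<longrightarrow>
     (\<forall>C\<in>opt_codebooks Q m k.
        measure Q {z\<in>space Q. vecf m (obsX z) \<in> margin_nbhd C t} \<le> K * t powr \<alpha>))"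

definition varphi1 :: "('a \<Rightarrow> 'x \<Rightarrow> real) \<Rightarrow> ('a \<Rightarrow> 'x \<Rightarrow> real) \<Rightarrow> 'a \<Rightarrow> real \<times> 'a \<times> 'x \<Rightarrow> real" where
  "varphi1 p m a z = indicator {a} (obsA z) / p a (obsX z) * (obsY z - m (obsA z) (obsX z)) + m a (obsX z)"

definition varphi2 :: "('a \<Rightarrow> 'x \<Rightarrow> real) \<Rightarrow> ('a \<Rightarrow> 'x \<Rightarrow> real) \<Rightarrow> 'a \<Rightarrow> real \<times> 'a \<times> 'x \<Rightarrow> real" where
  "varphi2 p m a z = 2 * m a (obsX z) * (indicator {a} (obsA z) / p a (obsX z)) * (obsY z - m (obsA z) (obsX z))
      + (m a (obsX z))\<^sup>2"

definition varphiC :: "('a::finite \<Rightarrow> 'x \<Rightarrow> real) \<Rightarrow> ('a \<Rightarrow> 'x \<Rightarrow> real) \<Rightarrow> (real^'a) set \<Rightarrow> real \<times> 'a \<times> 'x \<Rightarrow> real" where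
  "varphiC p m C z = (\<Sum>a\<in>UNIV. varphi2 p m a z - 2 * varphi1 p m a z * (proj C (vecf m (obsX z))) $ a
      + ((proj C (vecf m (obsX z))) $ a)\<^sup>2)"

definition eif_nonpar :: "'z measure \<Rightarrow> ('z measure \<Rightarrow> real) \<Rightarrow> ('z \<Rightarrow> real) \<Rightarrow> bool" where
  "eif_nonpar P \<Psi> \<phi> \<longleftrightarrow>
     \<phi> \<in> borel_measurable P \<and> integrable P (\<lambda>z. (\<phi> z)\<^sup>2) \<and> (\<integral>z. \<phi> z \<partial>P) = 0 \<and>
     (\<forall>s. s \<in> borel_measurable P \<and> (\<exists>M. \<forall>z\<in>space P. \<bar>s z\<bar> \<le> M) \<and> (\<integral>z. s z \<partial>P) = 0 \<longrightarrow>
        ((\<lambda>t. \<Psi> (density P (\<lambda>z. ennreal (1 + t * s z)))) has_real_derivative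
           (\<integral>z. \<phi> z * s z \<partial>P)) (at 0))"

end

theory Submission
  imports Defs
begin


lemma CE_nonneg:
  fixes w :: "'m \<Rightarrow> real" and T :: "'m \<Rightarrow> 's"
  assumes M: "finite_measure M" and T: "T \<in> measurable M S"
    and w: "w \<in> borel_measurable M" "\<And>z. 0 \<le> w z" "integrable M w"
  obtains g where "g \<in> borel_measurable S" "\<And>y. 0 \<le> g y"
    "\<And>f. f \<in> borel_measurable S \<Longrightarrow> integrable M (\<lambda>z. w z * f (T z)) \<longleftrightarrow> integrable M (\<lambda>z. g (T z) * f (T z))"
    "\<And>f. f \<in> borel_measurable S \<Longrightarrow> (\<integral>z. w z * f (T z) \<partial>M) = (\<integral>z. g (T z) * f (T z) \<partial>M)"
proof -
  interpret M: finite_measure M by fact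
  define L where "L = distr M S T"
  define N where "N = distr (density M w) S T"
  interpret L: finite_measure L unfolding L_def by (rule M.finite_measure_distr[OF T])
  have sN: "sets N = sets L" unfolding N_def L_def by simp
  have Td: "T \<in> measurable (density M w) S" using T by simp
  have finN: "finite_measure N"
  proof -
    have "emeasure (density M w) (space M) = (\<integral>\<^sup>+z. ennreal (w z) * indicator (space M) z \<partial>M)"
      by (intro emeasure_density) (use w(1) in auto)
    also have "\<dots> = (\<integral>\<^sup>+z. ennreal (w z) \<partial>M)"
      by (rule nn_integral_cong) simp
    also have "\<dots> = ennreal (\<integral>z. w z \<partial>M)"
      using w by (intro nn_integral_eq_integral) auto
    finally have "finite_measure (density M w)" by (intro finite_measureI) simp
    then show ?thesis unfolding N_def by (rule finite_measure.finite_measure_distr[OF _ Td])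
  qed
  have ac: "absolutely_continuous L N"
    unfolding absolutely_continuous_def
  proof
    fix A assume A: "A \<in> null_sets L"
    then have As: "A \<in> sets S" unfolding L_def by (simp add: null_sets_def)
    have "emeasure M (T -` A \<inter> space M) = 0" using A T As unfolding L_def
      by (simp add: null_sets_def emeasure_distr)
    then have "AE z in M. T z \<notin> A" using As T
      by (intro AE_I[of _ _ "T -` A \<inter> space M"]) auto
    then have "emeasure N A = 0" unfolding N_def using As T w
      by (auto simp: emeasure_distr emeasure_density intro!: nn_integral_0_iff_AE[THEN iffD2] elim!: eventually_mono split: split_indicator)
    then show "A \<in> null_sets N" using As sN unfolding L_def by (simp add: null_sets_def)
  qed
  define g where "g y = enn2real (RN_deriv L N y)" for y
  have gm: "g \<in> borel_measurable S" unfolding g_def using borel_measurable_RN_deriv[of L N] unfolding L_def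
      by simp
  show ?thesis
  proof
    show "g \<in> borel_measurable S" by (rule gm)
    show "\<And>y. 0 \<le> g y" unfolding g_def by simp
  next
    fix f :: "'s \<Rightarrow> real" assume f: "f \<in> borel_measurable S"
    have fL: "f \<in> borel_measurable L" using f unfolding L_def by simp
    have "integrable N f \<longleftrightarrow> integrable L (\<lambda>y. g y * f y)"
      unfolding g_def using L.RN_deriv_integrable[OF finite_measure.sigma_finite_measure[OF finN] ac sN fL] .
    moreover have "integrable N f \<longleftrightarrow> integrable M (\<lambda>z. w z * f (T z))"
      unfolding N_def using f Td w by (simp add: integrable_distr_eq integrable_density)
    moreover have "integrable L (\<lambda>y. g y * f y) \<longleftrightarrow> integrable M (\<lambda>z. g (T z) * f (T z))"
      unfolding L_def using f T gm by (subst integrable_distr_eq) auto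
    ultimately show "integrable M (\<lambda>z. w z * f (T z)) \<longleftrightarrow> integrable M (\<lambda>z. g (T z) * f (T z))" by simp
    have "integral\<^sup>L N f = (\<integral>y. g y * f y \<partial>L)"
      unfolding g_def using L.RN_deriv_integral[OF finite_measure.sigma_finite_measure[OF finN] ac sN fL] .
    moreover have "integral\<^sup>L N f = (\<integral>z. w z * f (T z) \<partial>M)"
      unfolding N_def using f Td w by (simp add: integral_distr integral_density)
    moreover have "(\<integral>y. g y * f y \<partial>L) = (\<integral>z. g (T z) * f (T z) \<partial>M)"
      unfolding L_def using f T gm by (subst integral_distr) auto
    ultimately show "(\<integral>z. w z * f (T z) \<partial>M) = (\<integral>z. g (T z) * f (T z) \<partial>M)" by simp
  qed
qed


lemma CE:
  fixes w :: "'m \<Rightarrow> real" and T :: "'m \<Rightarrow> 's"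
  assumes M: "finite_measure M" and T: "T \<in> measurable M S"
    and w: "w \<in> borel_measurable M" "integrable M w"
  obtains g where "g \<in> borel_measurable S"
    "\<And>f. f \<in> borel_measurable S \<Longrightarrow> integrable M (\<lambda>z. w z * f (T z)) \<Longrightarrow>
       integrable M (\<lambda>z. g (T z) * f (T z)) \<and> (\<integral>z. w z * f (T z) \<partial>M) = (\<integral>z. g (T z) * f (T z) \<partial>M)"
proof -
  have wp: "(\<lambda>z. max 0 (w z)) \<in> borel_measurable M" "integrable M (\<lambda>z. max 0 (w z))"
    using w by auto
  have wn: "(\<lambda>z. max 0 (- w z)) \<in> borel_measurable M" "integrable M (\<lambda>z. max 0 (- w z))"
    using w by auto
  obtain g1 where g1: "g1 \<in> borel_measurable S"
    "\<And>f. f \<in> borel_measurable S \<Longrightarrow> integrable M (\<lambda>z. max 0 (w z) * f (T z)) \<longleftrightarrow> integrable M (\<lambda>z. g1 (T z) * f (T z))"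
    "\<And>f. f \<in> borel_measurable S \<Longrightarrow> (\<integral>z. max 0 (w z) * f (T z) \<partial>M) = (\<integral>z. g1 (T z) * f (T z) \<partial>M)"
    by (rule CE_nonneg[OF M T wp(1) _ wp(2)]) (simp, blast)
  obtain g2 where g2: "g2 \<in> borel_measurable S"
    "\<And>f. f \<in> borel_measurable S \<Longrightarrow> integrable M (\<lambda>z. max 0 (- w z) * f (T z)) \<longleftrightarrow> integrable M (\<lambda>z. g2 (T z) * f (T z))"
    "\<And>f. f \<in> borel_measurable S \<Longrightarrow> (\<integral>z. max 0 (- w z) * f (T z) \<partial>M) = (\<integral>z. g2 (T z) * f (T z) \<partial>M)"
    by (rule CE_nonneg[OF M T wn(1) _ wn(2)]) (simp, blast)
  show ?thesis
  proof
    show "(\<lambda>y. g1 y - g2 y) \<in> borel_measurable S" using g1 g2 by auto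
  next
    fix f :: "'s \<Rightarrow> real" assume f: "f \<in> borel_measurable S" and int: "integrable M (\<lambda>z. w z * f (T z))"
    have fT: "(\<lambda>z. f (T z)) \<in> borel_measurable M" using f T by measurable
    have i1: "integrable M (\<lambda>z. max 0 (w z) * f (T z))"
      by (rule Bochner_Integration.integrable_bound[OF int]) (use fT w in \<open>auto simp: abs_mult intro!: AE_I2 mult_right_mono\<close>)
    have i2: "integrable M (\<lambda>z. max 0 (- w z) * f (T z))"
      by (rule Bochner_Integration.integrable_bound[OF int]) (use fT w in \<open>auto simp: abs_mult intro!: AE_I2 mult_right_mono\<close>)
    have j1: "integrable M (\<lambda>z. g1 (T z) * f (T z))" using g1(2)[OF f] i1 by simp
    have j2: "integrable M (\<lambda>z. g2 (T z) * f (T z))" using g2(2)[OF f] i2 by simp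
    have e: "\<And>z. w z * f (T z) = max 0 (w z) * f (T z) - max 0 (- w z) * f (T z)"
      by (simp add: max_def algebra_simps)
    have e2: "\<And>z. (g1 (T z) - g2 (T z)) * f (T z) = g1 (T z) * f (T z) - g2 (T z) * f (T z)"
      by (simp add: algebra_simps)
    show "integrable M (\<lambda>z. (g1 (T z) - g2 (T z)) * f (T z)) \<and>
        (\<integral>z. w z * f (T z) \<partial>M) = (\<integral>z. (g1 (T z) - g2 (T z)) * f (T z) \<partial>M)"
      unfolding e e2 using i1 i2 j1 j2 g1(3)[OF f] g2(3)[OF f] by simp
  qed
qed

locale eif_setup = prob_space P
  for P :: "(real \<times> 'a::finite \<times> 'x::euclidean_space) measure" +
  fixes mu pi :: "'a \<Rightarrow> 'x \<Rightarrow> real" and \<epsilon> B :: real and Cs :: "(real^'a) set"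
  assumes sets_P: "sets P = sets (borel \<Otimes>\<^sub>M (count_space UNIV \<Otimes>\<^sub>M borel))"
    and Y_L2: "integrable P (\<lambda>z. (obsY z)\<^sup>2)"
    and propens: "is_propensity P pi"
    and regr: "is_regression P mu"
    and eps: "\<epsilon> > 0" and pos: "\<forall>a. AE z in P. pi a (obsX z) \<ge> \<epsilon>"
    and A1_mu: "AE z in P. \<forall>a. \<bar>mu a (obsX z)\<bar> \<le> B"
    and finC: "finite Cs"
    and ties: "AE z in P. vecf mu (obsX z) \<notin> margin_nbhd Cs 0"
begin

abbreviation "SAX \<equiv> (count_space UNIV \<Otimes>\<^sub>M (borel :: 'x measure)) :: ('a \<times> 'x) measure"

lemma meas_P: "measurable P N = measurable (borel \<Otimes>\<^sub>M (count_space UNIV \<Otimes>\<^sub>M borel)) N"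
  by (rule measurable_cong_sets[OF sets_P refl])

lemma space_P: "space P = UNIV"
  using sets_eq_imp_space_eq[OF sets_P] by (simp add: space_pair_measure)

lemma sets_P_eq: "sets P = sets (borel \<Otimes>\<^sub>M (count_space UNIV \<Otimes>\<^sub>M borel))" by (rule sets_P)

lemma meas_Y[measurable]: "obsY \<in> borel_measurable P"
  unfolding meas_P obsY_def[abs_def] by measurable
lemma meas_X[measurable]: "obsX \<in> measurable P borel"
  unfolding meas_P obsX_def[abs_def] by measurable
lemma meas_A[measurable]: "obsA \<in> measurable P (count_space UNIV)"
  unfolding meas_P obsA_def[abs_def] by measurable
lemma meas_snd[measurable]: "snd \<in> measurable P SAX"
  unfolding meas_P by measurable

lemma mu_meas[measurable]: "mu a \<in> borel_measurable borel"
  using regr unfolding is_regression_def by auto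
lemma pi_meas[measurable]: "pi a \<in> borel_measurable borel"
  using propens unfolding is_propensity_def by auto

lemma snd_eq: "snd z = (obsA z, obsX z)"
  by (simp add: obsA_def obsX_def)

lemma meas_fun_AX:
  assumes "\<And>b. m b \<in> borel_measurable borel"
  shows "(\<lambda>y. m (fst y) (snd y)) \<in> borel_measurable SAX"
  by (rule measurable_compose_countable'[where I=UNIV]) (use assms in auto)

lemma meas_fun_slice:
  assumes "g \<in> borel_measurable SAX"
  shows "(\<lambda>x. g (a, x)) \<in> borel_measurable borel"
  using assms by measurable

end


lemma integrable_mult_bdd_AE:
  fixes f g :: "'m \<Rightarrow> real"
  assumes f: "integrable M f" and g: "g \<in> borel_measurable M" and b: "AE z in M. \<bar>g z\<bar> \<le> c"
  shows "integrable M (\<lambda>z. f z * g z)"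
proof (rule Bochner_Integration.integrable_bound[of _ "\<lambda>z. c * f z"])
  show "integrable M (\<lambda>z. c * f z)" using f by simp
  show "(\<lambda>z. f z * g z) \<in> borel_measurable M" using f g by measurable
  show "AE z in M. norm (f z * g z) \<le> norm (c * f z)"
    using b
  proof eventually_elim
    case (elim z)
    have "\<bar>f z\<bar> * \<bar>g z\<bar> \<le> \<bar>f z\<bar> * c" using elim by (intro mult_left_mono) auto
    also have "\<dots> \<le> \<bar>c\<bar> * \<bar>f z\<bar>" by (simp add: mult.commute mult_right_mono)
    finally show ?case by (simp add: abs_mult)
  qed
qed

lemma AE_eq_from_sets:
  fixes g1 g2 :: "'s \<Rightarrow> real"
  assumes T: "T \<in> measurable M S" and g: "g1 \<in> borel_measurable S" "g2 \<in> borel_measurable S"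
    and i: "integrable M (\<lambda>z. g1 (T z))" "integrable M (\<lambda>z. g2 (T z))"
    and eq: "\<And>B. B \<in> sets S \<Longrightarrow> (\<integral>z. g1 (T z) * indicator B (T z) \<partial>M) = (\<integral>z. g2 (T z) * indicator B (T z) \<partial>M)"
  shows "AE z in M. g1 (T z) = g2 (T z)"
proof -
  have le: "AE z in M. h1 (T z) \<le> h2 (T z)"
    if h: "h1 \<in> borel_measurable S" "h2 \<in> borel_measurable S"
      "integrable M (\<lambda>z. h1 (T z))" "integrable M (\<lambda>z. h2 (T z))"
      "\<And>B. B \<in> sets S \<Longrightarrow> (\<integral>z. h1 (T z) * indicator B (T z) \<partial>M) = (\<integral>z. h2 (T z) * indicator B (T z) \<partial>M)"
    for h1 h2 :: "'s \<Rightarrow> real"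
  proof -
    define B where "B = {y \<in> space S. h2 y < h1 y}"
    have B: "B \<in> sets S" unfolding B_def using h by measurable
    have ind: "(\<lambda>z. indicator B (T z) :: real) \<in> borel_measurable M" using B T by measurable
    have i1: "integrable M (\<lambda>z. h1 (T z) * indicator B (T z))"
      by (rule integrable_mult_bdd_AE[OF h(3) ind, of 1]) (auto split: split_indicator)
    have i2: "integrable M (\<lambda>z. h2 (T z) * indicator B (T z))"
      by (rule integrable_mult_bdd_AE[OF h(4) ind, of 1]) (auto split: split_indicator)
    have "(\<integral>z. h1 (T z) * indicator B (T z) - h2 (T z) * indicator B (T z) \<partial>M) = 0"
      using h(5)[OF B] i1 i2 by simp
    moreover have "AE z in M. 0 \<le> h1 (T z) * indicator B (T z) - h2 (T z) * indicator B (T z)"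
      by (rule AE_I2) (auto simp: B_def split: split_indicator)
    ultimately have "AE z in M. h1 (T z) * indicator B (T z) - h2 (T z) * indicator B (T z) = 0"
      using integral_nonneg_eq_0_iff_AE[of M "\<lambda>z. h1 (T z) * indicator B (T z) - h2 (T z) * indicator B (T z)"] i1 i2
      by simp
    then show ?thesis
    proof (rule AE_mp[OF _ AE_I2], intro impI)
      fix z assume z: "z \<in> space M" and e: "h1 (T z) * indicator B (T z) - h2 (T z) * indicator B (T z) = 0"
      have "T z \<in> space S" using T z by (auto simp: measurable_def)
      then show "h1 (T z) \<le> h2 (T z)" using e by (auto simp: B_def split: split_indicator_asm)
    qed
  qed
  have "AE z in M. g1 (T z) \<le> g2 (T z)" by (rule le[OF g i eq])
  moreover have "AE z in M. g2 (T z) \<le> g1 (T z)" by (rule le[OF g(2,1) i(2,1) eq[symmetric]])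
  ultimately show ?thesis by eventually_elim simp
qed


context eif_setup begin

lemma prop_set:
  assumes E: "E \<in> sets borel"
  shows "integrable P (\<lambda>z. pi a (obsX z) * indicator E (obsX z))"
    "(\<integral>z. indicator {a} (obsA z) * indicator E (obsX z) \<partial>P) = (\<integral>z. pi a (obsX z) * indicator E (obsX z) \<partial>P)"
proof -
  from propens E show "integrable P (\<lambda>z. pi a (obsX z) * indicator E (obsX z))"
    unfolding is_propensity_def by auto
  have m: "measure P {z\<in>space P. obsA z = a \<and> obsX z \<in> E} = (\<integral>z. pi a (obsX z) * indicator E (obsX z) \<partial>P)"
    using propens E unfolding is_propensity_def by auto
  have s: "{z\<in>space P. obsA z = a \<and> obsX z \<in> E} \<in> sets P" using E by measurable
  have "(\<integral>z. indicator {a} (obsA z) * indicator E (obsX z) \<partial>P) = (\<integral>z. indicator {z\<in>space P. obsA z = a \<and> obsX z \<in> E} z \<partial>P :: real)"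
    by (intro Bochner_Integration.integral_cong) (auto simp: space_P split: split_indicator)
  also have "\<dots> = measure P {z\<in>space P. obsA z = a \<and> obsX z \<in> E}"
    using s by simp
  finally show "(\<integral>z. indicator {a} (obsA z) * indicator E (obsX z) \<partial>P) = (\<integral>z. pi a (obsX z) * indicator E (obsX z) \<partial>P)"
    using m by simp
qed

lemma int_ind: "integrable P (\<lambda>z. indicator {a} (obsA z) * indicator E (obsX z) :: real)" if "E \<in> sets borel"
  using that by (intro integrable_const_bound[where B=1]) (auto split: split_indicator)

lemma POS:
  assumes E: "E \<in> sets borel" and ae: "AE z in P. obsA z = a \<longrightarrow> obsX z \<notin> E"
  shows "AE z in P. obsX z \<notin> E"
proof -
  have "AE z in P. indicator {a} (obsA z) * indicator E (obsX z) = (0::real)"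
    using ae by eventually_elim (auto split: split_indicator)
  then have "(\<integral>z. indicator {a} (obsA z) * indicator E (obsX z) \<partial>P) = (0::real)"
    by (rule integral_eq_zero_AE)
  then have z: "(\<integral>z. pi a (obsX z) * indicator E (obsX z) \<partial>P) = 0" using prop_set[OF E] by simp
  have nn: "AE z in P. 0 \<le> pi a (obsX z) * indicator E (obsX z)"
    using pos[rule_format, of a] eps by (auto elim!: eventually_mono split: split_indicator)
  have "AE z in P. pi a (obsX z) * indicator E (obsX z) = 0"
    using integral_nonneg_eq_0_iff_AE[OF prop_set(1)[OF E] nn] z by simp
  then show ?thesis using pos[rule_format, of a] eps by (auto elim!: eventually_mono[OF eventually_conj] split: split_indicator_asm)
qed

lemma prop_fun:
  fixes f :: "'x \<Rightarrow> real"
  assumes f: "f \<in> borel_measurable borel"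
    and i: "integrable P (\<lambda>z. indicator {a} (obsA z) * f (obsX z))"
  shows "integrable P (\<lambda>z. pi a (obsX z) * f (obsX z))"
    "(\<integral>z. indicator {a} (obsA z) * f (obsX z) \<partial>P) = (\<integral>z. pi a (obsX z) * f (obsX z) \<partial>P)"
proof -
  have w: "(\<lambda>z. indicator {a} (obsA z) :: real) \<in> borel_measurable P" by measurable
  have wi: "integrable P (\<lambda>z. indicator {a} (obsA z) :: real)"
    by (intro integrable_const_bound[where B=1]) (auto split: split_indicator)
  obtain g where g: "g \<in> borel_measurable borel"
    "\<And>f. f \<in> borel_measurable borel \<Longrightarrow> integrable P (\<lambda>z. indicator {a} (obsA z) * (f :: 'x \<Rightarrow> real) (obsX z)) \<Longrightarrow>
       integrable P (\<lambda>z. g (obsX z) * f (obsX z)) \<and> (\<integral>z. indicator {a} (obsA z) * f (obsX z) \<partial>P) = (\<integral>z. g (obsX z) * f (obsX z) \<partial>P)"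
    by (rule CE[OF finite_measure_axioms meas_X w wi]) blast
  have gi: "integrable P (\<lambda>z. g (obsX z))" using g(2)[of "\<lambda>_. 1"] wi by simp
  have pii: "integrable P (\<lambda>z. pi a (obsX z))" using prop_set(1)[of UNIV a] by simp
  have ae: "AE z in P. g (obsX z) = pi a (obsX z)"
  proof (rule AE_eq_from_sets[OF meas_X g(1) pi_meas gi pii])
    fix B :: "'x set" assume B: "B \<in> sets borel"
    have "(\<integral>z. g (obsX z) * indicator B (obsX z) \<partial>P) = (\<integral>z. indicator {a} (obsA z) * indicator B (obsX z) \<partial>P)"
      using g(2)[of "indicator B"] B int_ind[OF B] by simp
    also have "\<dots> = (\<integral>z. pi a (obsX z) * indicator B (obsX z) \<partial>P)" by (rule prop_set(2)[OF B])
    finally show "(\<integral>z. g (obsX z) * indicator B (obsX z) \<partial>P) = (\<integral>z. pi a (obsX z) * indicator B (obsX z) \<partial>P)" .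
  qed
  have ae2: "AE z in P. g (obsX z) * f (obsX z) = pi a (obsX z) * f (obsX z)" using ae by eventually_elim simp
  have gf: "integrable P (\<lambda>z. g (obsX z) * f (obsX z))" "(\<integral>z. indicator {a} (obsA z) * f (obsX z) \<partial>P) = (\<integral>z. g (obsX z) * f (obsX z) \<partial>P)"
    using g(2)[OF f i] by auto
  show "integrable P (\<lambda>z. pi a (obsX z) * f (obsX z))"
    by (rule integrable_cong_AE_imp[OF gf(1) _ ae2]) (use f in measurable)
  show "(\<integral>z. indicator {a} (obsA z) * f (obsX z) \<partial>P) = (\<integral>z. pi a (obsX z) * f (obsX z) \<partial>P)"
    using gf(2) integral_cong_AE[OF _ _ ae2] f g(1) by simp
qed

lemma prop_int:
  fixes f :: "'x \<Rightarrow> real"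
  assumes f: "f \<in> borel_measurable borel"
    and i: "integrable P (\<lambda>z. indicator {a} (obsA z) * f (obsX z))"
  shows "integrable P (\<lambda>z. f (obsX z))"
proof -
  have "integrable P (\<lambda>z. (1/\<epsilon>) * (pi a (obsX z) * f (obsX z)))" using prop_fun(1)[OF f i] by simp
  then show ?thesis
  proof (rule Bochner_Integration.integrable_bound)
    show "(\<lambda>z. f (obsX z)) \<in> borel_measurable P" using f by measurable
    show "AE z in P. norm (f (obsX z)) \<le> norm (1 / \<epsilon> * (pi a (obsX z) * f (obsX z)))"
      using pos[rule_format, of a]
    proof (eventually_elim)
      case (elim z)
      then have "\<epsilon> * \<bar>f (obsX z)\<bar> \<le> pi a (obsX z) * \<bar>f (obsX z)\<bar>" by (intro mult_right_mono) auto
      then have "\<bar>f (obsX z)\<bar> \<le> (1/\<epsilon>) * (pi a (obsX z) * \<bar>f (obsX z)\<bar>)" using eps by (simp add: field_simps)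
      then show ?case using eps elim by (simp add: abs_mult)
    qed
  qed
qed

end


lemma proj_in:
  fixes C :: "(real^'a::finite) set"
  assumes C: "finite C" "C \<noteq> {}"
  shows "proj C v \<in> C \<and> (\<forall>c\<in>C. norm (v - proj C v) \<le> norm (v - c))"
proof -
  have "Min ((\<lambda>c. norm (v - c)) ` C) \<in> (\<lambda>c. norm (v - c)) ` C" using C by (intro Min_in) auto
  then obtain c where c: "c \<in> C" "Min ((\<lambda>c. norm (v - c)) ` C) = norm (v - c)" by auto
  have "\<forall>c'\<in>C. norm (v - c) \<le> norm (v - c')"
    using c(2)[symmetric] C by (auto intro: Min_le)
  with c(1) have "\<exists>c. c \<in> C \<and> (\<forall>c'\<in>C. norm (v - c) \<le> norm (v - c'))" by blast
  then show ?thesis unfolding proj_def by (rule someI_ex)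
qed

lemma proj_empty: "proj {} v = proj {} w"
  unfolding proj_def by simp

lemma proj_le:
  assumes C: "finite C" shows "norm (u - proj C u) \<le> norm (u - proj C v)"
proof (cases "C = {}")
  case True
  then show ?thesis using proj_empty[of u v] by simp
next
  case False
  have "proj C v \<in> C" using proj_in[OF C False] by blast
  then show ?thesis using proj_in[OF C False, of u] by blast
qed

lemma d_lip: "finite C \<Longrightarrow> norm (u - proj C u) \<le> norm (u - v) + norm (v - proj C v)"
  using proj_le[of C u v] norm_triangle_ineq[of "u - v" "v - proj C v"] by simp

lemma d_lip_abs: "finite C \<Longrightarrow> \<bar>norm (u - proj C u) - norm (v - proj C v)\<bar> \<le> norm (u - v)"
  using d_lip[of C u v] d_lip[of C v u] by (simp add: norm_minus_commute)

lemma proj_bound: "finite C \<Longrightarrow> \<exists>R. \<forall>v. norm (proj C v) \<le> R"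
proof (cases "C = {}")
  case True then show ?thesis using proj_empty[of _ 0] by (metis order_refl)
next
  case False
  assume "finite C"
  then have "\<forall>v. norm (proj C v) \<le> Max (norm ` C)"
    using proj_in[OF \<open>finite C\<close> False] by (auto intro: Max_ge)
  then show ?thesis by blast
qed

lemma d_cont: "finite C \<Longrightarrow> continuous_on UNIV (\<lambda>v. norm (v - proj C v))"
  by (rule lipschitz_on_continuous_on[where L=1]) (auto simp: lipschitz_on_def dist_real_def dist_norm d_lip_abs)

lemma d_meas[measurable]: "finite C \<Longrightarrow> (\<lambda>v. norm (v - proj C v)) \<in> borel_measurable borel"
  by (rule borel_measurable_continuous_onI[OF d_cont])

definition nearest_set :: "(real^'a::finite) set \<Rightarrow> real^'a \<Rightarrow> (real^'a) set" where
  "nearest_set C v = {c\<in>C. \<forall>c'\<in>C. norm (v - c) \<le> norm (v - c')}"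

lemma proj_nearest: "proj C v = (SOME c. c \<in> nearest_set C v)"
  unfolding proj_def nearest_set_def by simp

lemma nearest_meas:
  assumes C: "finite C"
  shows "nearest_set C \<in> measurable borel (count_space (Pow C))"
proof -
  have fin: "finite (Pow C)" using C by simp
  have pm: "(\<lambda>v. \<forall>c\<in>C. (c \<in> S) = (\<forall>c'\<in>C. norm (v - c) \<le> norm (v - c'))) \<in> measurable borel (count_space UNIV)" for S
    using C by measurable
  then have "nearest_set C -` {S} \<inter> space borel \<in> sets borel" if "S \<in> Pow C" for S
  proof -
    have "nearest_set C -` {S} \<inter> space borel = {v. \<forall>c\<in>C. (c \<in> S) = (\<forall>c'\<in>C. norm (v - c) \<le> norm (v - c'))}"
    proof (intro set_eqI)
      fix v
      show "v \<in> nearest_set C -` {S} \<inter> space borel \<longleftrightarrow> v \<in> {v. \<forall>c\<in>C. (c \<in> S) = (\<forall>c'\<in>C. norm (v - c) \<le> norm (v - c'))}"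
        using that unfolding nearest_set_def vimage_def Int_iff mem_Collect_eq space_borel set_eq_iff singleton_iff
        by blast
    qed
    also have "\<dots> \<in> sets borel"
      using pm[of S] by (simp add: pred_def)
    finally show ?thesis .
  qed
  then show ?thesis
    by (subst measurable_count_space_eq2[OF fin]) (auto simp: nearest_set_def)
qed

lemma proj_meas[measurable]:
  assumes C: "finite C"
  shows "proj C \<in> borel_measurable borel"
proof -
  have "(\<lambda>S. SOME c. c \<in> S) \<in> measurable (count_space (Pow C)) (borel :: (real^'a) measure)"
    by simp
  from measurable_compose[OF nearest_meas[OF C] this]
  show ?thesis unfolding proj_nearest[abs_def] by (simp add: comp_def)
qed

lemma proj_unique:
  fixes C :: "(real^'a::finite) set"
  assumes C: "finite C" and c: "c \<in> C" and u: "\<forall>c'\<in>C. c' \<noteq> c \<longrightarrow> norm (v - c) < norm (v - c')"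
  shows "proj C v = c"
proof (rule ccontr)
  assume ne: "proj C v \<noteq> c"
  have "C \<noteq> {}" using c by auto
  from proj_in[OF C this, of v] c have p: "proj C v \<in> C" "norm (v - proj C v) \<le> norm (v - c)" by auto
  from u p(1) ne have "norm (v - c) < norm (v - proj C v)" by blast
  with p(2) show False by linarith
qed

lemma proj_eventually:
  fixes C :: "(real^'a::finite) set"
  assumes C: "finite C" and u: "C = {} \<or> (\<exists>c\<in>C. \<forall>c'\<in>C. c' \<noteq> c \<longrightarrow> norm (v0 - c) < norm (v0 - c'))"
  shows "eventually (\<lambda>v. proj C v = proj C v0) (nhds v0)"
proof (cases "C = {}")
  case True show ?thesis unfolding True by (intro always_eventually allI) (rule proj_empty)
next
  case False
  with u obtain c where c: "c \<in> C" "\<forall>c'\<in>C. c' \<noteq> c \<longrightarrow> norm (v0 - c) < norm (v0 - c')" by auto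
  have "eventually (\<lambda>v. \<forall>c'\<in>C - {c}. norm (v - c) < norm (v - c')) (nhds v0)"
  proof (rule eventually_ball_finite)
    show "finite (C - {c})" using C by simp
    show "\<forall>c'\<in>C - {c}. \<forall>\<^sub>F v in nhds v0. norm (v - c) < norm (v - c')"
    proof
      fix c' assume c': "c' \<in> C - {c}"
      have "((\<lambda>v. norm (v - c') - norm (v - c)) \<longlongrightarrow> norm (v0 - c') - norm (v0 - c)) (nhds v0)"
        by (intro tendsto_intros filterlim_ident)
      moreover have "norm (v0 - c') - norm (v0 - c) > 0" using c c' by auto
      ultimately have "eventually (\<lambda>v. norm (v - c') - norm (v - c) > 0) (nhds v0)"
        by (rule order_tendstoD(1))
      then show "\<forall>\<^sub>F v in nhds v0. norm (v - c) < norm (v - c')" by (auto elim: eventually_mono)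
    qed
  qed
  then show ?thesis
  proof (rule eventually_mono)
    fix v assume "\<forall>c'\<in>C - {c}. norm (v - c) < norm (v - c')"
    then have "proj C v = c" by (intro proj_unique[OF C c(1)]) auto
    moreover have "proj C v0 = c" using c by (intro proj_unique[OF C c(1)]) auto
    ultimately show "proj C v = proj C v0" by simp
  qed
qed

lemma no_tie:
  fixes C :: "(real^'a::finite) set"
  assumes C: "finite C" "C \<noteq> {}" and v: "v \<notin> margin_nbhd C 0"
  shows "\<exists>c\<in>C. \<forall>c'\<in>C. c' \<noteq> c \<longrightarrow> norm (v - c) < norm (v - c')"
proof (rule ccontr)
  assume nt: "\<not> ?thesis"
  define c where "c = proj C v"
  have c: "c \<in> C" "\<forall>c'\<in>C. dist v c \<le> dist v c'" using proj_in[OF C, of v] unfolding c_def by (auto simp: dist_norm)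
  then obtain c' where c': "c' \<in> C" "c' \<noteq> c" "norm (v - c') \<le> norm (v - c)" using nt by (auto simp: not_less)
  have ne: "C - {c} \<noteq> {}" using c' by auto
  have fin: "finite ((\<lambda>c'. dist v c') ` (C - {c}))" using C by simp
  have "Min ((\<lambda>c'. dist v c') ` (C - {c})) \<le> dist v c'"
    using c' fin by (intro Min_le) auto
  moreover have "dist v c \<le> Min ((\<lambda>c'. dist v c') ` (C - {c}))"
    using c fin ne by (subst Min_ge_iff) auto
  ultimately have "\<bar>dist v c - Min ((\<lambda>c'. dist v c') ` (C - {c}))\<bar> \<le> 0"
    using c' by (simp add: dist_norm)
  then have "v \<in> margin_nbhd C 0" unfolding margin_nbhd_def mem_Collect_eq
    using c ne by (intro bexI[of _ c] conjI) simp_all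
  with v show False by simp
qed


definition CEf :: "'m measure \<Rightarrow> ('m \<Rightarrow> 's) \<Rightarrow> 's measure \<Rightarrow> ('m \<Rightarrow> real) \<Rightarrow> ('s \<Rightarrow> real)" where
  "CEf M T S w = (SOME g. g \<in> borel_measurable S \<and> (\<forall>f. f \<in> borel_measurable S \<longrightarrow> integrable M (\<lambda>z. w z * f (T z)) \<longrightarrow>
       integrable M (\<lambda>z. g (T z) * f (T z)) \<and> (\<integral>z. w z * f (T z) \<partial>M) = (\<integral>z. g (T z) * f (T z) \<partial>M)))"

lemma CEf:
  fixes w :: "'m \<Rightarrow> real" and T :: "'m \<Rightarrow> 's"
  assumes M: "finite_measure M" and T: "T \<in> measurable M S"
    and w: "w \<in> borel_measurable M" "integrable M w"
  shows "CEf M T S w \<in> borel_measurable S"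
    "\<And>f. f \<in> borel_measurable S \<Longrightarrow> integrable M (\<lambda>z. w z * f (T z)) \<Longrightarrow>
       integrable M (\<lambda>z. CEf M T S w (T z) * f (T z))"
    "\<And>f. f \<in> borel_measurable S \<Longrightarrow> integrable M (\<lambda>z. w z * f (T z)) \<Longrightarrow>
       (\<integral>z. w z * f (T z) \<partial>M) = (\<integral>z. CEf M T S w (T z) * f (T z) \<partial>M)"
proof -
  obtain g where "g \<in> borel_measurable S"
    "\<And>f. f \<in> borel_measurable S \<Longrightarrow> integrable M (\<lambda>z. w z * f (T z)) \<Longrightarrow>
       integrable M (\<lambda>z. g (T z) * f (T z)) \<and> (\<integral>z. w z * f (T z) \<partial>M) = (\<integral>z. g (T z) * f (T z) \<partial>M)"
    using CE[OF M T w] by blast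
  then have ex: "\<exists>g. g \<in> borel_measurable S \<and> (\<forall>f. f \<in> borel_measurable S \<longrightarrow> integrable M (\<lambda>z. w z * f (T z)) \<longrightarrow>
       integrable M (\<lambda>z. g (T z) * f (T z)) \<and> (\<integral>z. w z * f (T z) \<partial>M) = (\<integral>z. g (T z) * f (T z) \<partial>M))"
    by blast
  note * = someI_ex[OF ex, folded CEf_def]
  show "CEf M T S w \<in> borel_measurable S" using * by blast
  show "\<And>f. f \<in> borel_measurable S \<Longrightarrow> integrable M (\<lambda>z. w z * f (T z)) \<Longrightarrow>
       integrable M (\<lambda>z. CEf M T S w (T z) * f (T z))" using * by blast
  show "\<And>f. f \<in> borel_measurable S \<Longrightarrow> integrable M (\<lambda>z. w z * f (T z)) \<Longrightarrow>
       (\<integral>z. w z * f (T z) \<partial>M) = (\<integral>z. CEf M T S w (T z) * f (T z) \<partial>M)" using * by blast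
qed

context eif_setup begin

lemma Y_int: "integrable P obsY"
  by (rule square_integrable_imp_integrable[OF meas_Y Y_L2])

lemma mu_bnd: "AE z in P. \<bar>mu a (obsX z)\<bar> \<le> B"
  using A1_mu by eventually_elim auto

lemma mu_bnd_A: "AE z in P. \<bar>mu (obsA z) (obsX z)\<bar> \<le> B"
  using A1_mu by eventually_elim auto

lemma reg_unique_le:
  assumes sM: "sets M = sets P" and r1: "is_regression M m1" and r2: "is_regression M m2"
  shows "AE z in M. obsA z = a \<longrightarrow> m1 a (obsX z) \<le> m2 a (obsX z)"
proof -
  have mX[measurable]: "obsX \<in> measurable M borel" using meas_X measurable_cong_sets[OF sM refl] by blast
  have mA[measurable]: "obsA \<in> measurable M (count_space UNIV)" using meas_A measurable_cong_sets[OF sM refl] by blast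
  have m1[measurable]: "m1 a \<in> borel_measurable borel" using r1 unfolding is_regression_def by blast
  have m2[measurable]: "m2 a \<in> borel_measurable borel" using r2 unfolding is_regression_def by blast
  define E where "E = {x. m2 a x < m1 a x}"
  have E: "E \<in> sets borel" unfolding E_def by measurable
  have i1: "integrable M (\<lambda>z. m1 a (obsX z) * indicator {a} (obsA z) * indicator E (obsX z))"
    and e1: "(\<integral>z. obsY z * indicator {a} (obsA z) * indicator E (obsX z) \<partial>M) = (\<integral>z. m1 a (obsX z) * indicator {a} (obsA z) * indicator E (obsX z) \<partial>M)"
    using r1 E unfolding is_regression_def by blast+
  have i2: "integrable M (\<lambda>z. m2 a (obsX z) * indicator {a} (obsA z) * indicator E (obsX z))"
    and e2: "(\<integral>z. obsY z * indicator {a} (obsA z) * indicator E (obsX z) \<partial>M) = (\<integral>z. m2 a (obsX z) * indicator {a} (obsA z) * indicator E (obsX z) \<partial>M)"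
    using r2 E unfolding is_regression_def by blast+
  have idiff: "integrable M (\<lambda>z. m1 a (obsX z) * indicator {a} (obsA z) * indicator E (obsX z) - m2 a (obsX z) * indicator {a} (obsA z) * indicator E (obsX z))"
    using i1 i2 by (rule Bochner_Integration.integrable_diff)
  have zz: "(\<integral>z. m1 a (obsX z) * indicator {a} (obsA z) * indicator E (obsX z) - m2 a (obsX z) * indicator {a} (obsA z) * indicator E (obsX z) \<partial>M) = 0"
    using i1 i2 e1 e2 by simp
  have nn: "AE z in M. 0 \<le> m1 a (obsX z) * indicator {a} (obsA z) * indicator E (obsX z) - m2 a (obsX z) * indicator {a} (obsA z) * indicator E (obsX z)"
    by (rule AE_I2) (auto simp: E_def split: split_indicator)
  have "AE z in M. m1 a (obsX z) * indicator {a} (obsA z) * indicator E (obsX z) - m2 a (obsX z) * indicator {a} (obsA z) * indicator E (obsX z) = 0"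
    using integral_nonneg_eq_0_iff_AE[OF idiff nn] zz by simp
  then show ?thesis
    by eventually_elim (auto simp: E_def split: split_indicator_asm)
qed

lemma reg_unique:
  assumes sM: "sets M = sets P" and r1: "is_regression M m1" and r2: "is_regression M m2"
    and ae: "\<And>Q. (AE z in M. Q z) \<Longrightarrow> (AE z in P. Q z)"
  shows "AE z in P. m1 a (obsX z) = m2 a (obsX z)"
proof -
  have m1[measurable]: "m1 a \<in> borel_measurable borel" using r1 unfolding is_regression_def by blast
  have m2[measurable]: "m2 a \<in> borel_measurable borel" using r2 unfolding is_regression_def by blast
  have "AE z in M. obsA z = a \<longrightarrow> m1 a (obsX z) = m2 a (obsX z)"
    using reg_unique_le[OF sM r1 r2, of a] reg_unique_le[OF sM r2 r1, of a] by eventually_elim auto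
  then have "AE z in M. obsA z = a \<longrightarrow> obsX z \<notin> {x. m1 a x \<noteq> m2 a x}" by simp
  then have "AE z in P. obsA z = a \<longrightarrow> obsX z \<notin> {x. m1 a x \<noteq> m2 a x}" by (rule ae)
  from POS[OF _ this] show ?thesis by auto
qed

end


lemma CE_upper:
  fixes w :: "'m \<Rightarrow> real" and g :: "'s \<Rightarrow> real"
  assumes M: "finite_measure M" and T: "T \<in> measurable M S" and g: "g \<in> borel_measurable S"
    and w: "w \<in> borel_measurable M" "integrable M w" and gi: "integrable M (\<lambda>z. g (T z))"
    and eq: "\<And>B. B \<in> sets S \<Longrightarrow> (\<integral>z. w z * indicator B (T z) \<partial>M) = (\<integral>z. g (T z) * indicator B (T z) \<partial>M)"
    and wc: "AE z in M. w z \<le> c"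
  shows "AE z in M. g (T z) \<le> c"
proof -
  interpret finite_measure M by fact
  define B where "B = {y \<in> space S. c < g y}"
  have B: "B \<in> sets S" unfolding B_def using g by measurable
  have ind[measurable]: "(\<lambda>z. indicator B (T z) :: real) \<in> borel_measurable M" using B T by measurable
  have i1: "integrable M (\<lambda>z. g (T z) * indicator B (T z))"
    by (rule integrable_mult_bdd_AE[OF gi ind, of 1]) (auto split: split_indicator)
  have i2: "integrable M (\<lambda>z. w z * indicator B (T z))"
    by (rule integrable_mult_bdd_AE[OF w(2) ind, of 1]) (auto split: split_indicator)
  have i3: "integrable M (\<lambda>z. c * indicator B (T z))"
    by (intro integrable_const_bound[where B="\<bar>c\<bar>"]) (auto split: split_indicator)
  have idiff: "integrable M (\<lambda>z. g (T z) * indicator B (T z) - c * indicator B (T z))"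
    using i1 i3 by simp
  have "(\<integral>z. w z * indicator B (T z) \<partial>M) \<le> (\<integral>z. c * indicator B (T z) \<partial>M)"
    using i2 i3 wc by (intro integral_mono_AE) (auto elim!: eventually_mono split: split_indicator)
  then have le: "(\<integral>z. g (T z) * indicator B (T z) - c * indicator B (T z) \<partial>M) \<le> 0"
    using eq[OF B] i1 i3 by simp
  have nn: "AE z in M. 0 \<le> g (T z) * indicator B (T z) - c * indicator B (T z)"
    by (rule AE_I2) (auto simp: B_def split: split_indicator)
  have "(\<integral>z. g (T z) * indicator B (T z) - c * indicator B (T z) \<partial>M) = 0"
    using le integral_nonneg_AE[OF nn] by linarith
  then have "AE z in M. g (T z) * indicator B (T z) - c * indicator B (T z) = 0"
    using integral_nonneg_eq_0_iff_AE[OF idiff nn] by simp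
  then show ?thesis
  proof (rule AE_mp[OF _ AE_I2], intro impI)
    fix z assume z: "z \<in> space M" and e: "g (T z) * indicator B (T z) - c * indicator B (T z) = 0"
    have "T z \<in> space S" using T z by (auto simp: measurable_def)
    then show "g (T z) \<le> c" using e by (auto simp: B_def split: split_indicator_asm)
  qed
qed

lemma CE_L2:
  fixes w :: "'m \<Rightarrow> real" and g :: "'s \<Rightarrow> real"
  assumes M: "finite_measure M" and T: "T \<in> measurable M S" and g[measurable]: "g \<in> borel_measurable S"
    and w[measurable]: "w \<in> borel_measurable M" and w2: "integrable M (\<lambda>z. (w z)\<^sup>2)"
    and eq: "\<And>f (K::real). f \<in> borel_measurable S \<Longrightarrow> (\<And>y. \<bar>f y\<bar> \<le> K) \<Longrightarrow>
        (\<integral>z. w z * f (T z) \<partial>M) = (\<integral>z. g (T z) * f (T z) \<partial>M)"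
  shows "integrable M (\<lambda>z. (g (T z))\<^sup>2)"
proof -
  interpret finite_measure M by fact
  have wi: "integrable M w" by (rule square_integrable_imp_integrable[OF w w2])
  have gT[measurable]: "(\<lambda>z. g (T z)) \<in> borel_measurable M" using T g by measurable
  define fn where "fn n y = g y * indicator {y. \<bar>g y\<bar> \<le> real n} y" for n y
  have fn_meas[measurable]: "fn n \<in> borel_measurable S" for n unfolding fn_def by measurable
  have fn_bnd: "\<bar>fn n y\<bar> \<le> real n" for n y by (auto simp: fn_def split: split_indicator)
  have fnT[measurable]: "(\<lambda>z. fn n (T z)) \<in> borel_measurable M" for n using T by measurable
  have En: "(\<integral>z. (fn n (T z))\<^sup>2 \<partial>M) \<le> (\<integral>z. (w z)\<^sup>2 \<partial>M)" for n
  proof -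
    have i1: "integrable M (\<lambda>z. (fn n (T z))\<^sup>2)"
      by (intro integrable_const_bound[where B="real n ^ 2"]) (auto intro!: AE_I2 power_mono simp: fn_bnd abs_le_square_iff[symmetric])
    have i2: "integrable M (\<lambda>z. w z * fn n (T z))"
      by (rule integrable_mult_bdd_AE[OF wi fnT, where c="real n"]) (auto simp: fn_bnd)
    have "(\<integral>z. (fn n (T z))\<^sup>2 \<partial>M) = (\<integral>z. g (T z) * fn n (T z) \<partial>M)"
      by (intro Bochner_Integration.integral_cong) (auto simp: fn_def power2_eq_square split: split_indicator)
    also have "\<dots> = (\<integral>z. w z * fn n (T z) \<partial>M)" using eq[OF fn_meas fn_bnd] by simp
    also have "\<dots> \<le> (\<integral>z. ((w z)\<^sup>2 + (fn n (T z))\<^sup>2) / 2 \<partial>M)"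
    proof (rule integral_mono[OF i2])
      show "integrable M (\<lambda>z. ((w z)\<^sup>2 + (fn n (T z))\<^sup>2) / 2)" using w2 i1 by simp
      fix z show "w z * fn n (T z) \<le> ((w z)\<^sup>2 + (fn n (T z))\<^sup>2) / 2"
        using sum_squares_bound[of "w z" "fn n (T z)"] by (simp add: field_simps)
    qed
    also have "\<dots> = ((\<integral>z. (w z)\<^sup>2 \<partial>M) + (\<integral>z. (fn n (T z))\<^sup>2 \<partial>M)) / 2"
      using w2 i1 by simp
    finally show ?thesis by simp
  qed
  have "(\<integral>\<^sup>+z. ennreal ((g (T z))\<^sup>2) \<partial>M) \<le> ennreal (\<integral>z. (w z)\<^sup>2 \<partial>M)"
  proof -
    have lim: "(\<lambda>n. \<integral>\<^sup>+z. ennreal ((fn n (T z))\<^sup>2) \<partial>M) \<longlonglongrightarrow> (\<integral>\<^sup>+z. ennreal ((g (T z))\<^sup>2) \<partial>M)"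
    proof (rule nn_integral_LIMSEQ)
      show "incseq (\<lambda>n z. ennreal ((fn n (T z))\<^sup>2))"
        by (auto simp: incseq_def le_fun_def fn_def split: split_indicator)
      show "\<And>n. (\<lambda>z. ennreal ((fn n (T z))\<^sup>2)) \<in> borel_measurable M" by measurable
      fix z
      obtain N :: nat where N: "\<bar>g (T z)\<bar> \<le> real N" using real_arch_simple by blast
      have "eventually (\<lambda>n. ennreal ((fn n (T z))\<^sup>2) = ennreal ((g (T z))\<^sup>2)) sequentially"
        using eventually_ge_at_top[of N]
        by eventually_elim (use N in \<open>auto simp: fn_def split: split_indicator\<close>)
      then show "(\<lambda>n. ennreal ((fn n (T z))\<^sup>2)) \<longlonglongrightarrow> ennreal ((g (T z))\<^sup>2)"
        by (rule tendsto_eventually)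
    qed
    have "(\<integral>\<^sup>+z. ennreal ((fn n (T z))\<^sup>2) \<partial>M) \<le> ennreal (\<integral>z. (w z)\<^sup>2 \<partial>M)" for n
    proof -
      have i1: "integrable M (\<lambda>z. (fn n (T z))\<^sup>2)"
        by (intro integrable_const_bound[where B="real n ^ 2"]) (auto intro!: AE_I2 power_mono simp: fn_bnd abs_le_square_iff[symmetric])
      have "(\<integral>\<^sup>+z. ennreal ((fn n (T z))\<^sup>2) \<partial>M) = ennreal (\<integral>z. (fn n (T z))\<^sup>2 \<partial>M)"
        using i1 by (intro nn_integral_eq_integral) auto
      then show ?thesis using En[of n] by (simp add: ennreal_leI)
    qed
    then show ?thesis using lim by (intro LIMSEQ_le_const2[OF lim]) auto
  qed
  then have "(\<integral>\<^sup>+z. ennreal ((g (T z))\<^sup>2) \<partial>M) < \<infinity>" by (simp add: le_less_trans)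
  then show ?thesis
    by (intro integrableI_nonneg) (auto)
qed


locale eif_s = eif_setup P mu pi \<epsilon> B Cs
  for P :: "(real \<times> 'a::finite \<times> 'x::euclidean_space) measure" and mu pi \<epsilon> B Cs +
  fixes s :: "real \<times> 'a \<times> 'x \<Rightarrow> real" and Ms :: real
  assumes s_meas[measurable]: "s \<in> borel_measurable P" and s_bnd: "\<And>z. \<bar>s z\<bar> \<le> Ms"
    and Ms_ge: "1 \<le> Ms" and s_mean: "(\<integral>z. s z \<partial>P) = 0"
begin

definition "Hc = CEf P snd SAX (\<lambda>z. obsY z * s z)"
definition "G0 = CEf P snd SAX s"
definition "Gc y = max (- Ms) (min Ms (G0 y))"

lemma s_le: "s z \<le> Ms" "- Ms \<le> s z" "- s z \<le> Ms"
  using s_bnd[of z] by auto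

lemma s_sq: "(s z)\<^sup>2 \<le> Ms\<^sup>2"
proof -
  have "\<bar>s z\<bar>\<^sup>2 \<le> Ms\<^sup>2" by (rule power_mono[OF s_bnd]) simp
  then show ?thesis by simp
qed

lemma fin_P: "finite_measure P" by (rule finite_measure_axioms)

lemma s_int: "integrable P s"
  by (intro integrable_const_bound[where B=Ms]) (auto simp: s_bnd)

lemma Ys_int: "integrable P (\<lambda>z. obsY z * s z)"
  by (rule integrable_mult_bdd_AE[OF Y_int s_meas, where c=Ms]) (simp add: s_bnd)

lemma Ys_L2: "integrable P (\<lambda>z. (obsY z * s z)\<^sup>2)"
proof (rule integrable_mult_bdd_AE[OF Y_L2, where g="\<lambda>z. (s z)\<^sup>2" and c="Ms\<^sup>2", THEN integrable_cong_AE_imp])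
  show "(\<lambda>z. (s z)\<^sup>2) \<in> borel_measurable P" by measurable
  show "AE z in P. \<bar>(s z)\<^sup>2\<bar> \<le> Ms\<^sup>2" by (auto intro!: AE_I2 simp: s_sq)
  show "(\<lambda>z. (obsY z * s z)\<^sup>2) \<in> borel_measurable P" by measurable
  show "AE z in P. (obsY z)\<^sup>2 * (s z)\<^sup>2 = (obsY z * s z)\<^sup>2" by (simp add: power_mult_distrib)
qed

lemma Hc_meas[measurable]: "Hc \<in> borel_measurable SAX"
  unfolding Hc_def by (rule CEf(1)[OF fin_P meas_snd _ Ys_int]) measurable

lemma Hc_eq:
  assumes "f \<in> borel_measurable SAX" "integrable P (\<lambda>z. obsY z * s z * f (snd z))"
  shows "integrable P (\<lambda>z. Hc (snd z) * f (snd z))"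
    "(\<integral>z. obsY z * s z * f (snd z) \<partial>P) = (\<integral>z. Hc (snd z) * f (snd z) \<partial>P)"
  unfolding Hc_def using CEf(2,3)[OF fin_P meas_snd _ Ys_int, of f] assms by (auto simp: mult.assoc)

lemma Hc_int: "integrable P (\<lambda>z. Hc (snd z))"
  using Hc_eq(1)[of "\<lambda>_. 1"] Ys_int by simp

lemma G0_meas[measurable]: "G0 \<in> borel_measurable SAX"
  unfolding G0_def by (rule CEf(1)[OF fin_P meas_snd s_meas s_int])

lemma G0_eq:
  assumes "f \<in> borel_measurable SAX" "integrable P (\<lambda>z. s z * f (snd z))"
  shows "integrable P (\<lambda>z. G0 (snd z) * f (snd z))"
    "(\<integral>z. s z * f (snd z) \<partial>P) = (\<integral>z. G0 (snd z) * f (snd z) \<partial>P)"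
  unfolding G0_def using CEf(2,3)[OF fin_P meas_snd s_meas s_int, of f] assms by auto

lemma G0_int: "integrable P (\<lambda>z. G0 (snd z))"
  using G0_eq(1)[of "\<lambda>_. 1"] s_int by simp

lemma G0_bnd: "AE z in P. \<bar>G0 (snd z)\<bar> \<le> Ms"
proof -
  have ind: "integrable P (\<lambda>z. s z * indicator B (snd z))" if "B \<in> sets SAX" for B
    by (rule integrable_mult_bdd_AE[OF s_int, where c=1]) (use that in \<open>auto split: split_indicator\<close>)
  have up: "AE z in P. G0 (snd z) \<le> Ms"
    by (rule CE_upper[OF fin_P meas_snd G0_meas s_meas s_int G0_int])
       (auto intro!: G0_eq(2) ind AE_I2 simp: s_le)
  have "AE z in P. - G0 (snd z) \<le> Ms"
  proof (rule CE_upper[OF fin_P meas_snd _ _ _ , where g="\<lambda>y. - G0 y" and w="\<lambda>z. - s z"])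
    show "integrable P (\<lambda>z. - s z)" using s_int by simp
    show "integrable P (\<lambda>z. - G0 (snd z))" using G0_int by simp
    fix B assume "B \<in> sets SAX"
    then show "(\<integral>z. - s z * indicator B (snd z) \<partial>P) = (\<integral>z. - G0 (snd z) * indicator B (snd z) \<partial>P)"
      using G0_eq(2)[of "indicator B"] ind by simp
  qed (auto intro!: AE_I2 simp: s_le)
  with up show ?thesis by eventually_elim auto
qed

lemma Gc_meas[measurable]: "Gc \<in> borel_measurable SAX"
  unfolding Gc_def[abs_def] by measurable

lemma Gc_bnd: "\<bar>Gc y\<bar> \<le> Ms"
  using Ms_ge unfolding Gc_def by auto

lemma Gc_ae: "AE z in P. Gc (snd z) = G0 (snd z)"
  using G0_bnd by eventually_elim (auto simp: Gc_def)

lemma Gc_eq: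
  assumes f: "f \<in> borel_measurable SAX" and i: "integrable P (\<lambda>z. s z * f (snd z))"
  shows "integrable P (\<lambda>z. Gc (snd z) * f (snd z))"
    "(\<integral>z. s z * f (snd z) \<partial>P) = (\<integral>z. Gc (snd z) * f (snd z) \<partial>P)"
proof -
  have ae: "AE z in P. G0 (snd z) * f (snd z) = Gc (snd z) * f (snd z)"
    using Gc_ae by eventually_elim simp
  show "integrable P (\<lambda>z. Gc (snd z) * f (snd z))"
    by (rule integrable_cong_AE_imp[OF G0_eq(1)[OF f i] _ ae]) (use f in measurable)
  show "(\<integral>z. s z * f (snd z) \<partial>P) = (\<integral>z. Gc (snd z) * f (snd z) \<partial>P)"
    using G0_eq(2)[OF f i] integral_cong_AE[OF _ _ ae] f by simp
qed

lemma Hc_L2: "integrable P (\<lambda>z. (Hc (snd z))\<^sup>2)"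
proof (rule CE_L2[OF fin_P meas_snd Hc_meas _ Ys_L2])
  fix f :: "'a \<times> 'x \<Rightarrow> real" and K assume f: "f \<in> borel_measurable SAX" and b: "\<And>y. \<bar>f y\<bar> \<le> K"
  have "integrable P (\<lambda>z. obsY z * s z * f (snd z))"
    by (rule integrable_mult_bdd_AE[OF Ys_int, where c=K]) (use f b in auto)
  then show "(\<integral>z. obsY z * s z * f (snd z) \<partial>P) = (\<integral>z. Hc (snd z) * f (snd z) \<partial>P)"
    using Hc_eq(2)[OF f] by simp
qed simp

lemma Hc_slice_L2: "integrable P (\<lambda>z. (Hc (a, obsX z))\<^sup>2)"
proof (rule prop_int[of "\<lambda>x. (Hc (a, x))\<^sup>2" a])
  show "(\<lambda>x. (Hc (a, x))\<^sup>2) \<in> borel_measurable borel" by measurable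
  show "integrable P (\<lambda>z. indicator {a} (obsA z) * (Hc (a, obsX z))\<^sup>2)"
  proof (rule integrable_mult_bdd_AE[OF Hc_L2, where c=1, THEN integrable_cong_AE_imp])
    show "(\<lambda>z. indicator {a} (obsA z) :: real) \<in> borel_measurable P" by measurable
    show "AE z in P. \<bar>indicator {a} (obsA z) :: real\<bar> \<le> 1" by (auto split: split_indicator)
    show "(\<lambda>z. indicator {a} (obsA z) * (Hc (a, obsX z))\<^sup>2) \<in> borel_measurable P" by measurable
    show "AE z in P. (Hc (snd z))\<^sup>2 * indicator {a} (obsA z) = indicator {a} (obsA z) * (Hc (a, obsX z))\<^sup>2"
      by (auto simp: snd_eq split: split_indicator)
  qed
qed

end


lemma vec_meas[measurable]:
  fixes f :: "'m \<Rightarrow> 'a::finite \<Rightarrow> real"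
  assumes "\<And>a. (\<lambda>z. f z a) \<in> borel_measurable M"
  shows "(\<lambda>z. (\<chi> a. f z a) :: real^'a) \<in> borel_measurable M"
proof (subst borel_measurable_euclidean_space, intro ballI)
  fix i :: "real^'a" assume "i \<in> Basis"
  then obtain j where j: "i = axis j 1" by (auto simp: Basis_vec_def)
  show "(\<lambda>z. (\<chi> a. f z a) \<bullet> i) \<in> borel_measurable M"
    unfolding j inner_axis using assms by simp
qed

lemma vecf_meas[measurable]:
  assumes "\<And>a. m a \<in> borel_measurable borel"
  shows "vecf m \<in> borel_measurable borel"
  unfolding vecf_def[abs_def] by (rule vec_meas) (use assms in simp)


context eif_s begin

definition "mut t a x = (mu a x + t * Hc (a, x)) / (1 + t * Gc (a, x))"
definition "Pt t = density P (\<lambda>z. ennreal (1 + t * s z))"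
definition "dlt = 1 / (2 * Ms)"

lemma dlt_pos: "0 < dlt" using Ms_ge by (simp add: dlt_def)

lemma small_prod:
  assumes t: "\<bar>t\<bar> \<le> dlt" and c: "\<bar>c\<bar> \<le> Ms"
  shows "\<bar>t * c\<bar> \<le> 1/2"
proof -
  have "\<bar>t * c\<bar> \<le> dlt * Ms" unfolding abs_mult by (rule mult_mono) (use t c in auto)
  also have "\<dots> = 1/2" using Ms_ge by (simp add: dlt_def)
  finally show ?thesis .
qed

lemma den_pos: "\<bar>t\<bar> \<le> dlt \<Longrightarrow> 1/2 \<le> 1 + t * Gc y"
  using small_prod[of t "Gc y"] Gc_bnd[of y] by (auto simp: abs_le_iff)

lemma dens_pos: "\<bar>t\<bar> \<le> dlt \<Longrightarrow> 1/2 \<le> 1 + t * s z"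
  using small_prod[of t "s z"] s_bnd[of z] by (auto simp: abs_le_iff)

lemma mut_meas[measurable]: "mut t a \<in> borel_measurable borel"
  unfolding mut_def[abs_def] by measurable

lemma mut_meas2[measurable]: "(\<lambda>y. mut t (fst y) (snd y)) \<in> borel_measurable SAX"
  by (rule meas_fun_AX) simp

lemma mut_mult: "\<bar>t\<bar> \<le> dlt \<Longrightarrow> (1 + t * Gc (a, x)) * mut t a x = mu a x + t * Hc (a, x)"
  using den_pos[of t "(a, x)"] by (simp add: mut_def)

lemma mut_bnd: "\<bar>t\<bar> \<le> dlt \<Longrightarrow> \<bar>mut t a x\<bar> \<le> 2 * (\<bar>mu a x\<bar> + \<bar>t\<bar> * \<bar>Hc (a, x)\<bar>)"
proof -
  assume t: "\<bar>t\<bar> \<le> dlt"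
  have d: "1/2 \<le> 1 + t * Gc (a, x)" by (rule den_pos[OF t])
  have "\<bar>mut t a x\<bar> = \<bar>mu a x + t * Hc (a, x)\<bar> / (1 + t * Gc (a, x))"
    using d by (simp add: mut_def abs_div)
  also have "\<dots> \<le> \<bar>mu a x + t * Hc (a, x)\<bar> / (1/2)"
    using d by (intro divide_left_mono) auto
  also have "\<dots> \<le> 2 * (\<bar>mu a x\<bar> + \<bar>t\<bar> * \<bar>Hc (a, x)\<bar>)"
    using abs_triangle_ineq[of "mu a x" "t * Hc (a, x)"] by (simp add: abs_mult)
  finally show ?thesis .
qed

lemma mut_int:
  assumes t: "\<bar>t\<bar> \<le> dlt"
  shows "integrable P (\<lambda>z. mut t (obsA z) (obsX z))"
proof (rule Bochner_Integration.integrable_bound[where f="\<lambda>z. 2 * (B + \<bar>t\<bar> * \<bar>Hc (snd z)\<bar>)"])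
  show "integrable P (\<lambda>z. 2 * (B + \<bar>t\<bar> * \<bar>Hc (snd z)\<bar>))"
    using Hc_int by (intro integrable_mult_right Bochner_Integration.integrable_add) auto
  show "(\<lambda>z. mut t (obsA z) (obsX z)) \<in> borel_measurable P"
    using measurable_compose[OF meas_snd mut_meas2] by (simp add: snd_eq)
  show "AE z in P. norm (mut t (obsA z) (obsX z)) \<le> norm (2 * (B + \<bar>t\<bar> * \<bar>Hc (snd z)\<bar>))"
    using mu_bnd_A
  proof eventually_elim
    case (elim z)
    have "\<bar>mut t (obsA z) (obsX z)\<bar> \<le> 2 * (\<bar>mu (obsA z) (obsX z)\<bar> + \<bar>t\<bar> * \<bar>Hc (snd z)\<bar>)"
      using mut_bnd[OF t] by (simp add: snd_eq)
    also have "\<dots> \<le> 2 * (B + \<bar>t\<bar> * \<bar>Hc (snd z)\<bar>)" using elim by simp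
    also have "\<dots> \<le> norm (2 * (B + \<bar>t\<bar> * \<bar>Hc (snd z)\<bar>))" by simp
    finally show ?case by simp
  qed
qed

lemma ind_bnd: "\<bar>indicator {a} (obsA z) * indicator S (obsX z) :: real\<bar> \<le> 1"
  by (auto split: split_indicator)

lemma reg_Pt_aux:
  assumes t: "\<bar>t\<bar> \<le> dlt" and S: "S \<in> sets borel"
  shows "integrable (Pt t) (\<lambda>z. obsY z * indicator {a} (obsA z) * indicator S (obsX z)) \<and>
        integrable (Pt t) (\<lambda>z. mut t a (obsX z) * indicator {a} (obsA z) * indicator S (obsX z)) \<and>
        (\<integral>z. obsY z * indicator {a} (obsA z) * indicator S (obsX z) \<partial>Pt t)
          = (\<integral>z. mut t a (obsX z) * indicator {a} (obsA z) * indicator S (obsX z) \<partial>Pt t)"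
proof -
  define w where "w z = 1 + t * s z" for z
  have w_meas[measurable]: "w \<in> borel_measurable P" unfolding w_def by measurable
  have w_nn': "0 \<le> w z" for z unfolding w_def using dens_pos[OF t, of z] by linarith
  have w_nn: "AE z in P. 0 \<le> w z" using w_nn' by simp
  have Pt: "Pt t = density P w" unfolding Pt_def w_def by simp
  define r where "r y = (indicator {a} (fst y) * indicator S (snd y) :: real)" for y :: "'a \<times> 'x"
  have r_meas[measurable]: "r \<in> borel_measurable SAX" unfolding r_def[abs_def] using S by measurable
  have r_bnd: "\<bar>r y\<bar> \<le> 1" for y by (auto simp: r_def split: split_indicator)
  have rz: "r (snd z) = indicator {a} (obsA z) * indicator S (obsX z)" for z by (simp add: r_def snd_eq)
  define phi where "phi y = mut t (fst y) (snd y) * r y" for y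
  have phi_meas[measurable]: "phi \<in> borel_measurable SAX" unfolding phi_def[abs_def] by measurable
  have phiz: "mut t a (obsX z) * indicator {a} (obsA z) * indicator S (obsX z) = phi (snd z)" for z
    by (cases "obsA z = a") (simp_all add: phi_def r_def snd_eq)
  have Yr_int: "integrable P (\<lambda>z. obsY z * r (snd z))"
    by (rule integrable_mult_bdd_AE[OF Y_int, where c=1]) (auto simp: r_bnd)
  have Ysr_int: "integrable P (\<lambda>z. obsY z * s z * r (snd z))"
    by (rule integrable_mult_bdd_AE[OF Ys_int, where c=1]) (auto simp: r_bnd)
  have phi_int: "integrable P (\<lambda>z. phi (snd z))"
    unfolding phi_def using integrable_mult_bdd_AE[OF mut_int[OF t], where c=1 and g="\<lambda>z. r (snd z)"]
    by (simp add: r_bnd snd_eq)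
  have sphi_int: "integrable P (\<lambda>z. s z * phi (snd z))"
    using integrable_mult_bdd_AE[OF phi_int s_meas, where c=Ms] by (simp add: s_bnd mult.commute)
  have Hr_int: "integrable P (\<lambda>z. Hc (snd z) * r (snd z))" using Hc_eq(1)[OF r_meas Ysr_int] .
  have Hr_eq: "(\<integral>z. obsY z * s z * r (snd z) \<partial>P) = (\<integral>z. Hc (snd z) * r (snd z) \<partial>P)" using Hc_eq(2)[OF r_meas Ysr_int] .
  have Gphi_int: "integrable P (\<lambda>z. Gc (snd z) * phi (snd z))" using Gc_eq(1)[OF phi_meas sphi_int] .
  have Gphi_eq: "(\<integral>z. s z * phi (snd z) \<partial>P) = (\<integral>z. Gc (snd z) * phi (snd z) \<partial>P)" using Gc_eq(2)[OF phi_meas sphi_int] .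
  have mur_int: "integrable P (\<lambda>z. mu a (obsX z) * indicator {a} (obsA z) * indicator S (obsX z))"
    and mur_eq: "(\<integral>z. obsY z * indicator {a} (obsA z) * indicator S (obsX z) \<partial>P) = (\<integral>z. mu a (obsX z) * indicator {a} (obsA z) * indicator S (obsX z) \<partial>P)"
    using regr S unfolding is_regression_def by blast+
  have key: "(1 + t * Gc (snd z)) * phi (snd z) = mu a (obsX z) * indicator {a} (obsA z) * indicator S (obsX z) + t * (Hc (snd z) * r (snd z))" for z
  proof (cases "obsA z = a")
    case True
    then show ?thesis using mut_mult[OF t, of a "obsX z"]
      by (simp add: phi_def r_def snd_eq algebra_simps)
  next
    case False
    then show ?thesis by (simp add: phi_def r_def snd_eq)
  qed
  have w_bnd: "\<bar>w z\<bar> \<le> 3/2" for z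
    using small_prod[OF t s_bnd[of z]] by (simp add: w_def abs_le_iff)
  have dens_int: "integrable (Pt t) f \<longleftrightarrow> integrable P (\<lambda>z. w z * f z)" if [measurable]: "f \<in> borel_measurable P" for f
    unfolding Pt by (subst integrable_density) (auto simp: w_nn)
  have dens_integral: "(\<integral>z. f z \<partial>Pt t) = (\<integral>z. w z * f z \<partial>P)" if [measurable]: "f \<in> borel_measurable P" for f
    unfolding Pt by (subst integral_density) (auto simp: w_nn)
  have f1[measurable]: "(\<lambda>z. obsY z * indicator {a} (obsA z) * indicator S (obsX z) :: real) \<in> borel_measurable P"
    using S by measurable
  have f2[measurable]: "(\<lambda>z. mut t a (obsX z) * indicator {a} (obsA z) * indicator S (obsX z) :: real) \<in> borel_measurable P"
    using S by measurable
  have f1z: "obsY z * indicator {a} (obsA z) * indicator S (obsX z) = obsY z * r (snd z)" for z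
    by (simp add: rz mult.assoc)
  have wYr_int: "integrable P (\<lambda>z. w z * (obsY z * r (snd z)))"
    using integrable_mult_bdd_AE[OF Yr_int w_meas, where c="3/2"] w_bnd by (simp add: mult.commute)
  have wphi_int: "integrable P (\<lambda>z. w z * phi (snd z))"
    using integrable_mult_bdd_AE[OF phi_int w_meas, where c="3/2"] w_bnd by (simp add: mult.commute)
  have c1: "integrable (Pt t) (\<lambda>z. obsY z * indicator {a} (obsA z) * indicator S (obsX z))"
    using dens_int[OF f1] wYr_int by (simp add: f1z)
  have c2: "integrable (Pt t) (\<lambda>z. mut t a (obsX z) * indicator {a} (obsA z) * indicator S (obsX z))"
    using dens_int[OF f2] wphi_int by (simp add: phiz)
  have "(\<integral>z. mut t a (obsX z) * indicator {a} (obsA z) * indicator S (obsX z) \<partial>Pt t) = (\<integral>z. w z * phi (snd z) \<partial>P)"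
    using dens_integral[OF f2] by (simp add: phiz)
  also have "\<dots> = (\<integral>z. phi (snd z) + t * (s z * phi (snd z)) \<partial>P)"
    by (simp add: w_def algebra_simps)
  also have "\<dots> = (\<integral>z. phi (snd z) \<partial>P) + t * (\<integral>z. s z * phi (snd z) \<partial>P)"
    using phi_int sphi_int by simp
  also have "\<dots> = (\<integral>z. phi (snd z) \<partial>P) + t * (\<integral>z. Gc (snd z) * phi (snd z) \<partial>P)"
    using Gphi_eq by simp
  also have "\<dots> = (\<integral>z. (1 + t * Gc (snd z)) * phi (snd z) \<partial>P)"
    using phi_int Gphi_int by (simp add: algebra_simps)
  also have "\<dots> = (\<integral>z. mu a (obsX z) * indicator {a} (obsA z) * indicator S (obsX z) + t * (Hc (snd z) * r (snd z)) \<partial>P)"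
    by (simp only: key)
  also have "\<dots> = (\<integral>z. mu a (obsX z) * indicator {a} (obsA z) * indicator S (obsX z) \<partial>P) + t * (\<integral>z. Hc (snd z) * r (snd z) \<partial>P)"
    using mur_int Hr_int by simp
  also have "\<dots> = (\<integral>z. obsY z * r (snd z) \<partial>P) + t * (\<integral>z. obsY z * s z * r (snd z) \<partial>P)"
    using mur_eq Hr_eq by (simp add: f1z)
  also have "\<dots> = (\<integral>z. obsY z * r (snd z) + t * (obsY z * s z * r (snd z)) \<partial>P)"
    using Yr_int Ysr_int by simp
  also have "\<dots> = (\<integral>z. w z * (obsY z * r (snd z)) \<partial>P)"
    by (simp add: w_def algebra_simps)
  also have "\<dots> = (\<integral>z. obsY z * indicator {a} (obsA z) * indicator S (obsX z) \<partial>Pt t)"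
    using dens_integral[OF f1] by (simp add: f1z)
  finally show ?thesis using c1 c2 by simp
qed

lemma reg_Pt:
  assumes t: "\<bar>t\<bar> \<le> dlt"
  shows "is_regression (Pt t) (mut t)"
  unfolding is_regression_def using reg_Pt_aux[OF t] by simp

end


context eif_s begin

definition "Fv v = (norm (v - proj Cs v))\<^sup>2"

lemma Fv_meas[measurable]: "Fv \<in> borel_measurable borel"
  unfolding Fv_def[abs_def] using d_meas[OF finC] by measurable

lemma AE_Pt_P:
  assumes t: "\<bar>t\<bar> \<le> dlt"
  shows "(AE z in Pt t. Q z) \<longleftrightarrow> (AE z in P. Q z)"
proof -
  have pos: "0 < 1 + t * s z" for z using dens_pos[OF t, of z] by linarith
  have "(AE z in Pt t. Q z) \<longleftrightarrow> (AE z in P. 0 < ennreal (1 + t * s z) \<longrightarrow> Q z)"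
    unfolding Pt_def by (rule AE_density) measurable
  also have "\<dots> \<longleftrightarrow> (AE z in P. Q z)" using pos by simp
  finally show ?thesis .
qed

lemma sets_Pt: "sets (Pt t) = sets P" unfolding Pt_def by simp

lemma psi_Pt:
  assumes t: "\<bar>t\<bar> \<le> dlt"
  shows "psi (Pt t) Cs = (\<integral>z. (1 + t * s z) * Fv (vecf (mut t) (obsX z)) \<partial>P)"
proof -
  define m where "m = (SOME m. is_regression (Pt t) m)"
  have rm: "is_regression (Pt t) m" unfolding m_def by (rule someI[of _ "mut t"]) (rule reg_Pt[OF t])
  have m_meas[measurable]: "m a \<in> borel_measurable borel" for a using rm unfolding is_regression_def by blast
  have "AE z in P. m a (obsX z) = mut t a (obsX z)" for a
    by (rule reg_unique[OF sets_Pt rm reg_Pt[OF t]]) (simp add: AE_Pt_P[OF t])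
  then have "AE z in P. \<forall>a. m a (obsX z) = mut t a (obsX z)" by (simp add: AE_all_countable)
  then have ae: "AE z in Pt t. Fv (vecf m (obsX z)) = Fv (vecf (mut t) (obsX z))"
    unfolding AE_Pt_P[OF t] by eventually_elim (simp add: vecf_def)
  have mXt[measurable]: "obsX \<in> measurable (Pt t) borel" using meas_X measurable_cong_sets[OF sets_Pt refl] by blast
  have "psi (Pt t) Cs = (\<integral>z. Fv (vecf m (obsX z)) \<partial>Pt t)"
    unfolding psi_def risk_def m_def Fv_def ..
  also have "\<dots> = (\<integral>z. Fv (vecf (mut t) (obsX z)) \<partial>Pt t)"
    by (rule integral_cong_AE) (use ae in measurable)
  also have "\<dots> = (\<integral>z. (1 + t * s z) * Fv (vecf (mut t) (obsX z)) \<partial>P)"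
    unfolding Pt_def
  proof (subst integral_density)
    have "0 \<le> 1 + t * s z" for z using dens_pos[OF t, of z] by linarith
    then show "AE z in P. 0 \<le> 1 + t * s z" by simp
  qed measurable
  finally show ?thesis .
qed

end


lemma normsq_vec: "(norm (w :: real^'a::finite))\<^sup>2 = (\<Sum>a\<in>UNIV. (w $ a)\<^sup>2)"
  unfolding power2_norm_eq_inner inner_vec_def by (simp add: power2_eq_square)

context eif_s begin

definition "kf a x = Hc (a, x) - mu a x * Gc (a, x)"
definition "K2 x = (\<Sum>a\<in>UNIV. (kf a x)\<^sup>2)"

lemma mut0: "mut 0 a x = mu a x" by (simp add: mut_def)
lemma vecf_mut0: "vecf (mut 0) = vecf mu" by (simp add: mut0[abs_def])

lemma mut_deriv: "((\<lambda>t. mut t a x) has_field_derivative kf a x) (at 0)"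
  unfolding mut_def[abs_def] kf_def
  by (auto intro!: derivative_eq_intros simp: power2_eq_square)

lemma mut_cont: "((\<lambda>t. mut t a x) \<longlongrightarrow> mu a x) (nhds 0)"
proof -
  have "((\<lambda>t. (mu a x + t * Hc (a, x)) / (1 + t * Gc (a, x))) \<longlongrightarrow> (mu a x + 0 * Hc (a, x)) / (1 + 0 * Gc (a, x))) (nhds 0)"
    by (intro tendsto_intros filterlim_ident) simp
  then show ?thesis by (simp add: mut_def[abs_def])
qed

lemma vecf_cont: "((\<lambda>t. vecf (mut t) x) \<longlongrightarrow> vecf mu x) (nhds 0)"
  unfolding vecf_def by (intro tendsto_vec_lambda mut_cont)

lemma pt_lim:
  assumes nt: "Cs = {} \<or> (\<exists>c\<in>Cs. \<forall>c'\<in>Cs. c' \<noteq> c \<longrightarrow> norm (vecf mu x - c) < norm (vecf mu x - c'))"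
  shows "((\<lambda>t. ((1 + t * \<sigma>) * Fv (vecf (mut t) x) - Fv (vecf mu x)) / t) \<longlongrightarrow>
     Fv (vecf mu x) * \<sigma> + (\<Sum>a\<in>UNIV. 2 * (mu a x - proj Cs (vecf mu x) $ a) * kf a x)) (at 0)"
proof -
  define c where "c = proj Cs (vecf mu x)"
  have ev: "eventually (\<lambda>t. proj Cs (vecf (mut t) x) = c) (nhds 0)"
    unfolding c_def by (rule eventually_compose_filterlim[OF proj_eventually[OF finC nt] vecf_cont])
  define g where "g t = (1 + t * \<sigma>) * Fv (vecf (mut t) x)" for t
  define g' where "g' t = (1 + t * \<sigma>) * (\<Sum>a\<in>UNIV. (mut t a x - c $ a)\<^sup>2)" for t
  have Fv_c: "Fv v = (\<Sum>a\<in>UNIV. (v $ a - c $ a)\<^sup>2)" if "proj Cs v = c" for v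
    unfolding Fv_def that normsq_vec by simp
  have evg: "eventually (\<lambda>t. g t = g' t) (nhds 0)"
    using ev by eventually_elim (simp add: g_def g'_def Fv_c vecf_def)
  have F0: "Fv (vecf mu x) = (\<Sum>a\<in>UNIV. (mu a x - c $ a)\<^sup>2)"
    by (subst Fv_c) (simp_all add: c_def vecf_def)
  define D where "D = Fv (vecf mu x) * \<sigma> + (\<Sum>a\<in>UNIV. 2 * (mu a x - c $ a) * kf a x)"
  have dg': "(g' has_field_derivative D) (at 0)"
  proof -
    have "(g' has_field_derivative (\<sigma> * (\<Sum>a\<in>UNIV. (mut 0 a x - c $ a)\<^sup>2) + (1 + 0 * \<sigma>) * (\<Sum>a\<in>UNIV. 2 * (mut 0 a x - c $ a) * kf a x))) (at 0)"
      unfolding g'_def[abs_def]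
      by (auto intro!: derivative_eq_intros mut_deriv simp: power2_eq_square algebra_simps)
    then show ?thesis by (simp add: D_def F0 mut0 mult.commute)
  qed
  have dg: "(g has_field_derivative D) (at 0)"
    using dg' DERIV_cong_ev[OF refl evg refl] by simp
  then have "((\<lambda>t. (g t - g 0) / (t - 0)) \<longlongrightarrow> D) (at 0)"
    by (simp add: has_field_derivative_iff)
  then show ?thesis by (simp add: g_def vecf_mut0 D_def c_def)
qed


lemma mut_diff:
  assumes t: "\<bar>t\<bar> \<le> dlt"
  shows "\<bar>mut t a x - mu a x\<bar> \<le> 2 * \<bar>t\<bar> * \<bar>kf a x\<bar>"
proof -
  have d: "1/2 \<le> 1 + t * Gc (a, x)" by (rule den_pos[OF t])
  have eq: "(1 + t * Gc (a, x)) * (mut t a x - mu a x) = t * kf a x"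
    using mut_mult[OF t, of a x] by (simp add: kf_def algebra_simps)
  have "(1/2) * \<bar>mut t a x - mu a x\<bar> \<le> (1 + t * Gc (a, x)) * \<bar>mut t a x - mu a x\<bar>"
    using d by (intro mult_right_mono) auto
  also have "\<dots> = \<bar>t * kf a x\<bar>"
  proof -
    have pos: "0 < 1 + t * Gc (a, x)" using d by linarith
    have "\<bar>(1 + t * Gc (a, x)) * (mut t a x - mu a x)\<bar> = (1 + t * Gc (a, x)) * \<bar>mut t a x - mu a x\<bar>"
      by (simp only: abs_mult abs_of_pos[OF pos])
    then show ?thesis using eq by simp
  qed
  finally show ?thesis by (simp add: abs_mult)
qed

lemma K2_nn: "0 \<le> K2 x" unfolding K2_def by (intro sum_nonneg) simp

lemma e_bnd:
  assumes t: "\<bar>t\<bar> \<le> dlt"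
  shows "norm (vecf (mut t) x - vecf mu x) \<le> 2 * \<bar>t\<bar> * sqrt (K2 x)"
proof (rule power2_le_imp_le)
  show "0 \<le> 2 * \<bar>t\<bar> * sqrt (K2 x)" using K2_nn by simp
  have "(norm (vecf (mut t) x - vecf mu x))\<^sup>2 = (\<Sum>a\<in>UNIV. (mut t a x - mu a x)\<^sup>2)"
    by (simp add: normsq_vec vecf_def)
  also have "\<dots> \<le> (\<Sum>a\<in>UNIV. (2 * \<bar>t\<bar> * \<bar>kf a x\<bar>)\<^sup>2)"
  proof (rule sum_mono)
    fix a
    have "\<bar>mut t a x - mu a x\<bar>\<^sup>2 \<le> (2 * \<bar>t\<bar> * \<bar>kf a x\<bar>)\<^sup>2" by (rule power_mono[OF mut_diff[OF t]]) simp
    then show "(mut t a x - mu a x)\<^sup>2 \<le> (2 * \<bar>t\<bar> * \<bar>kf a x\<bar>)\<^sup>2" by simp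
  qed
  also have "\<dots> = (2 * \<bar>t\<bar>)\<^sup>2 * K2 x"
    by (simp add: K2_def sum_distrib_left power_mult_distrib)
  also have "\<dots> = (2 * \<bar>t\<bar> * sqrt (K2 x))\<^sup>2"
    using K2_nn by (simp add: power_mult_distrib)
  finally show "(norm (vecf (mut t) x - vecf mu x))\<^sup>2 \<le> (2 * \<bar>t\<bar> * sqrt (K2 x))\<^sup>2" .
qed

lemma dlt_le: "dlt \<le> 1/2" using Ms_ge by (simp add: dlt_def field_simps)

lemma pt_bnd:
  assumes t: "\<bar>t\<bar> \<le> dlt" "t \<noteq> 0" and sg: "\<bar>\<sigma>\<bar> \<le> Ms"
  shows "\<bar>((1 + t * \<sigma>) * Fv (vecf (mut t) x) - Fv (vecf mu x)) / t\<bar> \<le> 6 * K2 x + (3 + Ms) * Fv (vecf mu x)"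
proof -
  define u where "u = vecf (mut t) x"
  define v where "v = vecf mu x"
  define e where "e = norm (u - v)"
  define r where "r = sqrt (K2 x)"
  define du where "du = norm (u - proj Cs u)"
  define dv where "dv = norm (v - proj Cs v)"
  have r2: "r\<^sup>2 = K2 x" "0 \<le> r" using K2_nn by (auto simp: r_def)
  have e0: "0 \<le> e" "0 \<le> du" "0 \<le> dv" by (auto simp: e_def du_def dv_def)
  have h1: "e \<le> 2 * \<bar>t\<bar> * r" using e_bnd[OF t(1)] by (simp add: e_def u_def v_def r_def)
  have tpos: "0 < \<bar>t\<bar>" using t by simp
  have h1': "e \<le> r"
  proof -
    have "2 * \<bar>t\<bar> \<le> 1" using t(1) dlt_le by simp
    then have "2 * \<bar>t\<bar> * r \<le> 1 * r" using r2 by (intro mult_right_mono) auto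
    then show ?thesis using h1 by simp
  qed
  have h2: "\<bar>du - dv\<bar> \<le> e" unfolding du_def dv_def e_def by (rule d_lip_abs[OF finC])
  have FvU: "Fv u = du\<^sup>2" and FvV: "Fv v = dv\<^sup>2" by (simp_all add: Fv_def du_def dv_def)
  have h3: "\<bar>Fv u - Fv v\<bar> \<le> e * (2 * dv + e)"
  proof -
    have f: "Fv u - Fv v = (du - dv) * (du + dv)" by (simp add: FvU FvV power2_eq_square algebra_simps)
    have "\<bar>Fv u - Fv v\<bar> = \<bar>du - dv\<bar> * (du + dv)"
      unfolding f abs_mult using e0 by simp
    also have "\<dots> \<le> e * (2 * dv + e)"
      using h2 e0 by (intro mult_mono) auto
    finally show ?thesis .
  qed
  have h4: "\<bar>t * \<sigma>\<bar> \<le> 1/2" by (rule small_prod[OF t(1) sg])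
  have h5: "\<bar>1 + t * \<sigma>\<bar> \<le> 3/2" using h4 by (simp add: abs_le_iff)
  have num: "(1 + t * \<sigma>) * Fv u - Fv v = (1 + t * \<sigma>) * (Fv u - Fv v) + t * \<sigma> * Fv v"
    by (simp add: algebra_simps)
  have "\<bar>(1 + t * \<sigma>) * Fv u - Fv v\<bar> \<le> (3/2) * (e * (2 * dv + e)) + \<bar>t\<bar> * (Ms * Fv v)"
  proof -
    have a: "\<bar>(1 + t * \<sigma>) * (Fv u - Fv v)\<bar> \<le> (3/2) * (e * (2 * dv + e))"
      unfolding abs_mult by (rule mult_mono[OF h5 h3]) auto
    have b: "\<bar>t * \<sigma> * Fv v\<bar> \<le> \<bar>t\<bar> * (Ms * Fv v)"
    proof -
      have "\<bar>\<sigma>\<bar> * dv\<^sup>2 \<le> Ms * dv\<^sup>2" using sg by (intro mult_right_mono) auto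
      then have "\<bar>t\<bar> * (\<bar>\<sigma>\<bar> * dv\<^sup>2) \<le> \<bar>t\<bar> * (Ms * dv\<^sup>2)" by (intro mult_left_mono) auto
      then show ?thesis by (simp add: abs_mult FvV mult.assoc)
    qed
    show ?thesis unfolding num using a b abs_triangle_ineq[of "(1 + t * \<sigma>) * (Fv u - Fv v)" "t * \<sigma> * Fv v"] by linarith
  qed
  also have "\<dots> \<le> (3/2) * ((2 * \<bar>t\<bar> * r) * (2 * dv + r)) + \<bar>t\<bar> * (Ms * Fv v)"
    using h1 h1' e0 r2 Ms_ge by (intro add_mono mult_left_mono mult_mono) auto
  also have "\<dots> = \<bar>t\<bar> * (6 * r * dv + 3 * r\<^sup>2 + Ms * Fv v)"
    by (simp add: algebra_simps power2_eq_square)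
  also have "\<dots> \<le> \<bar>t\<bar> * (6 * K2 x + (3 + Ms) * Fv v)"
  proof (rule mult_left_mono)
    have "2 * r * dv \<le> r\<^sup>2 + dv\<^sup>2" using sum_squares_bound[of r dv] by simp
    then show "6 * r * dv + 3 * r\<^sup>2 + Ms * Fv v \<le> 6 * K2 x + (3 + Ms) * Fv v"
      using r2 by (simp add: FvV algebra_simps)
  qed simp
  finally have "\<bar>(1 + t * \<sigma>) * Fv u - Fv v\<bar> \<le> \<bar>t\<bar> * (6 * K2 x + (3 + Ms) * Fv v)" .
  then show ?thesis using tpos by (simp add: abs_divide divide_le_eq u_def v_def mult.commute)
qed

end


context eif_s begin

definition "Phi t = (\<integral>z. (1 + t * s z) * Fv (vecf (mut t) (obsX z)) \<partial>P)"
definition "Dz z = Fv (vecf mu (obsX z)) * s z + (\<Sum>a\<in>UNIV. 2 * (mu a (obsX z) - proj Cs (vecf mu (obsX z)) $ a) * kf a (obsX z))"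
definition "Wd z = 6 * K2 (obsX z) + (3 + Ms) * Fv (vecf mu (obsX z))"
definition "qf t z = ((1 + t * s z) * Fv (vecf (mut t) (obsX z)) - Fv (vecf mu (obsX z))) / t"

lemma kf_meas[measurable]: "kf a \<in> borel_measurable borel"
  unfolding kf_def[abs_def] using meas_fun_slice[OF Hc_meas] meas_fun_slice[OF Gc_meas] by measurable

lemma K2_meas[measurable]: "K2 \<in> borel_measurable borel"
  unfolding K2_def[abs_def] by measurable

lemma kf_sq_int: "integrable P (\<lambda>z. (kf a (obsX z))\<^sup>2)"
proof (rule Bochner_Integration.integrable_bound[where f="\<lambda>z. 2 * (Hc (a, obsX z))\<^sup>2 + 2 * (B * Ms)\<^sup>2"])
  show "integrable P (\<lambda>z. 2 * (Hc (a, obsX z))\<^sup>2 + 2 * (B * Ms)\<^sup>2)"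
    using Hc_slice_L2[of a] by simp
  show "(\<lambda>z. (kf a (obsX z))\<^sup>2) \<in> borel_measurable P" by measurable
  show "AE z in P. norm ((kf a (obsX z))\<^sup>2) \<le> norm (2 * (Hc (a, obsX z))\<^sup>2 + 2 * (B * Ms)\<^sup>2)"
    using mu_bnd[of a]
  proof eventually_elim
    case (elim z)
    define h where "h = Hc (a, obsX z)"
    define g where "g = mu a (obsX z) * Gc (a, obsX z)"
    have "\<bar>g\<bar> \<le> B * Ms" unfolding g_def abs_mult using elim Gc_bnd[of "(a, obsX z)"]
      by (intro mult_mono) auto
    then have g2: "g\<^sup>2 \<le> (B * Ms)\<^sup>2" by (metis abs_ge_zero abs_le_square_iff order.trans power2_abs abs_ge_self)
    have "(h - g)\<^sup>2 \<le> (h - g)\<^sup>2 + (h + g)\<^sup>2" by simp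
    also have "\<dots> = 2 * h\<^sup>2 + 2 * g\<^sup>2" by (simp add: power2_eq_square algebra_simps)
    finally have "(h - g)\<^sup>2 \<le> 2 * h\<^sup>2 + 2 * g\<^sup>2" .
    then have "(kf a (obsX z))\<^sup>2 \<le> 2 * h\<^sup>2 + 2 * (B * Ms)\<^sup>2" using g2 by (simp add: kf_def h_def g_def)
    then show ?case by (simp add: h_def)
  qed
qed

lemma K2_int: "integrable P (\<lambda>z. K2 (obsX z))"
  unfolding K2_def using kf_sq_int by (intro Bochner_Integration.integrable_sum) simp

lemma Fv0_bnd: "\<exists>R. AE z in P. \<bar>Fv (vecf mu (obsX z))\<bar> \<le> R"
proof -
  obtain R where R: "\<And>v. norm (proj Cs v) \<le> R" using proj_bound[OF finC] by blast
  have "AE z in P. \<bar>Fv (vecf mu (obsX z))\<bar> \<le> (real CARD('a) * \<bar>B\<bar> + R)\<^sup>2"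
    using A1_mu
  proof eventually_elim
    case (elim z)
    define v where "v = vecf mu (obsX z)"
    have "norm v \<le> (\<Sum>a\<in>UNIV. \<bar>v $ a\<bar>)" by (rule norm_le_l1_cart)
    also have "\<dots> \<le> (\<Sum>a\<in>(UNIV::'a set). \<bar>B\<bar>)"
    proof (rule sum_mono)
      fix a have "\<bar>mu a (obsX z)\<bar> \<le> B" using elim by blast
      then show "\<bar>v $ a\<bar> \<le> \<bar>B\<bar>" by (simp add: v_def vecf_def)
    qed
    finally have nv: "norm v \<le> real CARD('a) * \<bar>B\<bar>" by simp
    have "norm (v - proj Cs v) \<le> norm v + norm (proj Cs v)" by (rule norm_triangle_ineq4)
    also have "\<dots> \<le> real CARD('a) * \<bar>B\<bar> + R" using nv R[of v] by simp
    finally have "(norm (v - proj Cs v))\<^sup>2 \<le> (real CARD('a) * \<bar>B\<bar> + R)\<^sup>2"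
      by (intro power_mono) auto
    then show ?case by (simp add: Fv_def v_def)
  qed
  then show ?thesis by blast
qed

lemma Fv0_int: "integrable P (\<lambda>z. Fv (vecf mu (obsX z)))"
proof -
  obtain R where "AE z in P. \<bar>Fv (vecf mu (obsX z))\<bar> \<le> R" using Fv0_bnd by blast
  then show ?thesis by (intro integrable_const_bound[where B=R]) auto
qed

lemma Wd_int: "integrable P Wd"
  unfolding Wd_def[abs_def] using K2_int Fv0_int by simp

lemma qf_meas[measurable]: "qf t \<in> borel_measurable P"
  unfolding qf_def[abs_def] by measurable

lemma Dz_meas[measurable]: "Dz \<in> borel_measurable P"
proof -
  have u0: "(\<lambda>z. vecf mu (obsX z)) \<in> borel_measurable P" by measurable
  have pz[measurable]: "(\<lambda>z. proj Cs (vecf mu (obsX z))) \<in> borel_measurable P"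
    using measurable_compose[OF u0 proj_meas[OF finC]] by (simp add: comp_def)
  have kz[measurable]: "(\<lambda>z. kf a (obsX z)) \<in> borel_measurable P" for a
    using measurable_compose[OF meas_X kf_meas] by (simp add: comp_def)
  have pa: "(\<lambda>z. proj Cs (vecf mu (obsX z)) $ a) \<in> borel_measurable P" for a
    using measurable_compose[OF pz borel_measurable_nth] by (simp add: comp_def)
  have ma: "(\<lambda>z. mu a (obsX z)) \<in> borel_measurable P" for a by measurable
  have fz: "(\<lambda>z. Fv (vecf mu (obsX z))) \<in> borel_measurable P" by measurable
  show ?thesis unfolding Dz_def[abs_def]
    by (intro borel_measurable_add borel_measurable_times borel_measurable_sum borel_measurable_diff
        borel_measurable_const pa kz ma fz s_meas)
qed

lemma no_tie_AE: "AE z in P. Cs = {} \<or> (\<exists>c\<in>Cs. \<forall>c'\<in>Cs. c' \<noteq> c \<longrightarrow> norm (vecf mu (obsX z) - c) < norm (vecf mu (obsX z) - c'))"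
  using ties by eventually_elim (use no_tie[OF finC] in blast)

lemma qf_bnd: "\<bar>t\<bar> \<le> dlt \<Longrightarrow> t \<noteq> 0 \<Longrightarrow> \<bar>qf t z\<bar> \<le> Wd z"
  unfolding qf_def Wd_def by (rule pt_bnd) (auto simp: s_bnd)

lemma qf_int: "\<bar>t\<bar> \<le> dlt \<Longrightarrow> t \<noteq> 0 \<Longrightarrow> integrable P (qf t)"
  by (rule Bochner_Integration.integrable_bound[OF Wd_int]) (auto intro!: AE_I2 order.trans[OF qf_bnd] simp: Wd_def)

end


context eif_s begin

lemma Phi0: "Phi 0 = (\<integral>z. Fv (vecf mu (obsX z)) \<partial>P)"
  by (simp add: Phi_def vecf_mut0)

lemma Phi_quot:
  assumes t: "\<bar>t\<bar> \<le> dlt" "t \<noteq> 0"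
  shows "(Phi t - Phi 0) / t = (\<integral>z. qf t z \<partial>P)"
proof -
  have pw: "(1 + t * s z) * Fv (vecf (mut t) (obsX z)) = Fv (vecf mu (obsX z)) + t * qf t z" for z
    using t(2) by (simp add: qf_def)
  have "Phi t = (\<integral>z. Fv (vecf mu (obsX z)) + t * qf t z \<partial>P)"
    unfolding Phi_def pw ..
  also have "\<dots> = Phi 0 + t * (\<integral>z. qf t z \<partial>P)"
    using Fv0_int qf_int[OF t] by (simp add: Phi0)
  finally show ?thesis using t(2) by simp
qed

lemma Phi_deriv: "(Phi has_field_derivative (\<integral>z. Dz z \<partial>P)) (at 0)"
proof -
  have "((\<lambda>y. (Phi y - Phi 0) / (y - 0)) \<longlongrightarrow> (\<integral>z. Dz z \<partial>P)) (at 0 within {-dlt<..<dlt})"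
  proof (subst tendsto_at_iff_sequentially, intro allI impI)
    fix X :: "nat \<Rightarrow> real" assume X: "\<forall>i. X i \<in> {-dlt<..<dlt} - {0}" and lim: "X \<longlonglongrightarrow> 0"
    have Xi: "\<bar>X i\<bar> \<le> dlt" "X i \<noteq> 0" for i using X[rule_format, of i] by auto
    have eq: "((\<lambda>y. (Phi y - Phi 0) / (y - 0)) \<circ> X) = (\<lambda>i. \<integral>z. qf (X i) z \<partial>P)"
      using Phi_quot[OF Xi] by (simp add: comp_def)
    have fX: "filterlim X (at 0) sequentially"
      by (rule filterlim_atI[OF lim]) (use Xi in simp)
    show "((\<lambda>y. (Phi y - Phi 0) / (y - 0)) \<circ> X) \<longlonglongrightarrow> (\<integral>z. Dz z \<partial>P)"
      unfolding eq
    proof (rule integral_dominated_convergence[where w=Wd])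
      show "Dz \<in> borel_measurable P" by simp
      show "\<And>i. qf (X i) \<in> borel_measurable P" by simp
      show "integrable P Wd" by (rule Wd_int)
      show "\<And>i. AE z in P. norm (qf (X i) z) \<le> Wd z" using qf_bnd[OF Xi] by simp
      show "AE z in P. (\<lambda>i. qf (X i) z) \<longlonglongrightarrow> Dz z"
        using no_tie_AE
      proof eventually_elim
        case (elim z)
        have "((\<lambda>t. qf t z) \<longlongrightarrow> Dz z) (at 0)"
          unfolding qf_def Dz_def by (rule pt_lim[OF elim])
        from filterlim_compose[OF this fX] show ?case .
      qed
    qed
  qed
  then have "((\<lambda>y. (Phi y - Phi 0) / (y - 0)) \<longlongrightarrow> (\<integral>z. Dz z \<partial>P)) (at 0)"
    using at_within_open[of 0 "{-dlt<..<dlt}"] dlt_pos by simp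
  then show ?thesis by (simp add: has_field_derivative_iff)
qed

lemma psi_deriv: "((\<lambda>t. psi (density P (\<lambda>z. ennreal (1 + t * s z))) Cs) has_field_derivative (\<integral>z. Dz z \<partial>P)) (at 0)"
proof -
  have "eventually (\<lambda>t. t \<in> {-dlt<..<dlt}) (nhds 0)"
    using dlt_pos by (intro eventually_nhds_in_open) auto
  then have ev: "eventually (\<lambda>t. psi (density P (\<lambda>z. ennreal (1 + t * s z))) Cs = Phi t) (nhds 0)"
  proof eventually_elim
    case (elim t)
    then have "\<bar>t\<bar> \<le> dlt" by auto
    from psi_Pt[OF this] show ?case by (simp add: Pt_def Phi_def)
  qed
  show ?thesis using Phi_deriv DERIV_cong_ev[OF refl ev refl] by simp
qed

end


lemma alg4: "2 * m * i * d + m\<^sup>2 - 2 * (i * d + m) * c + c\<^sup>2 = (m - c)\<^sup>2 + 2 * (m - c) * (i * d)" for m c i d :: real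
  by (simp add: power2_eq_square algebra_simps)

context eif_setup begin

definition "cf a x = proj Cs (vecf mu x) $ a"
definition "Rf a z = indicator {a} (obsA z) / pi a (obsX z) * (obsY z - mu (obsA z) (obsX z))"
definition "F0 z = (\<Sum>a\<in>UNIV. (mu a (obsX z) - cf a (obsX z))\<^sup>2)"

lemma varphiC_eq: "varphiC pi mu Cs z = F0 z + (\<Sum>a\<in>UNIV. 2 * (mu a (obsX z) - cf a (obsX z)) * Rf a z)"
proof -
  have "varphiC pi mu Cs z = (\<Sum>a\<in>UNIV. (mu a (obsX z) - cf a (obsX z))\<^sup>2 + 2 * (mu a (obsX z) - cf a (obsX z)) * Rf a z)"
    unfolding varphiC_def varphi1_def varphi2_def cf_def Rf_def
    by (intro sum.cong refl) (rule alg4)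
  then show ?thesis by (simp add: F0_def sum.distrib)
qed

lemma F0_Fv: "F0 z = (norm (vecf mu (obsX z) - proj Cs (vecf mu (obsX z))))\<^sup>2"
  by (simp add: F0_def normsq_vec cf_def vecf_def)

lemma cf_meas[measurable]: "cf a \<in> borel_measurable borel"
proof -
  have "(\<lambda>x. proj Cs (vecf mu x)) \<in> borel_measurable borel"
    using measurable_compose[OF vecf_meas[OF mu_meas] proj_meas[OF finC]] by (simp add: comp_def)
  from measurable_compose[OF this borel_measurable_nth] show ?thesis
    unfolding cf_def[abs_def] by (simp add: comp_def)
qed

lemma Rf_meas[measurable]: "Rf a \<in> borel_measurable P"
  unfolding Rf_def[abs_def] by measurable

lemma F0_meas[measurable]: "F0 \<in> borel_measurable P"
  unfolding F0_def[abs_def] by measurable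

lemma varphiC_meas[measurable]: "varphiC pi mu Cs \<in> borel_measurable P"
  unfolding varphiC_eq[abs_def] by measurable

lemma good_AE: "AE z in P. \<forall>a. \<bar>mu a (obsX z)\<bar> \<le> B \<and> \<epsilon> \<le> pi a (obsX z)"
proof -
  have "AE z in P. \<forall>a. \<epsilon> \<le> pi a (obsX z)" using pos by (simp add: AE_all_countable)
  with A1_mu show ?thesis by eventually_elim auto
qed

lemma proj_R: "\<exists>R\<ge>0. \<forall>a x. \<bar>cf a x\<bar> \<le> R"
proof -
  obtain R where R: "\<And>v. norm (proj Cs v) \<le> R" using proj_bound[OF finC] by blast
  have "\<bar>cf a x\<bar> \<le> R" for a x unfolding cf_def using component_le_norm_cart R order.trans by blast
  moreover have "0 \<le> R" using R[of 0] norm_ge_zero order.trans by blast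
  ultimately show ?thesis by blast
qed


lemma Rf_bnd:
  assumes "\<forall>a. \<bar>mu a (obsX z)\<bar> \<le> B \<and> \<epsilon> \<le> pi a (obsX z)"
  shows "\<bar>Rf a z\<bar> \<le> (\<bar>obsY z\<bar> + \<bar>B\<bar>) / \<epsilon>"
proof (cases "obsA z = a")
  case True
  have p: "\<epsilon> \<le> pi a (obsX z)" "\<bar>mu a (obsX z)\<bar> \<le> B" using assms by auto
  have "\<bar>Rf a z\<bar> = \<bar>obsY z - mu a (obsX z)\<bar> / pi a (obsX z)"
    using True p eps by (simp add: Rf_def abs_div abs_mult)
  also have "\<dots> \<le> \<bar>obsY z - mu a (obsX z)\<bar> / \<epsilon>"
    using p eps by (intro divide_left_mono) auto
  also have "\<dots> \<le> (\<bar>obsY z\<bar> + \<bar>B\<bar>) / \<epsilon>"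
    using p eps by (intro divide_right_mono) auto
  finally show ?thesis .
next
  case False
  then show ?thesis using eps by (simp add: Rf_def)
qed

lemma varphiC_bnd: "\<exists>K0 K1. 0 \<le> K1 \<and> (AE z in P. \<bar>varphiC pi mu Cs z\<bar> \<le> K0 + K1 * \<bar>obsY z\<bar>)"
proof -
  obtain R where R: "0 \<le> R" "\<And>a x. \<bar>cf a x\<bar> \<le> R" using proj_R by blast
  define N where "N = real CARD('a)"
  define K0 where "K0 = N * (\<bar>B\<bar> + R)\<^sup>2 + N * (2 * (\<bar>B\<bar> + R) * \<bar>B\<bar> / \<epsilon>)"
  define K1 where "K1 = N * (2 * (\<bar>B\<bar> + R) / \<epsilon>)"
  have "AE z in P. \<bar>varphiC pi mu Cs z\<bar> \<le> K0 + K1 * \<bar>obsY z\<bar>"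
    using good_AE
  proof eventually_elim
    case (elim z)
    have mc: "\<bar>mu a (obsX z) - cf a (obsX z)\<bar> \<le> \<bar>B\<bar> + R" for a
    proof -
      have "\<bar>mu a (obsX z)\<bar> \<le> \<bar>B\<bar>" using elim by (meson abs_ge_self order.trans)
      then show ?thesis using R(2)[of a "obsX z"] by (simp add: abs_le_iff)
    qed
    have t1: "\<bar>F0 z\<bar> \<le> N * (\<bar>B\<bar> + R)\<^sup>2"
    proof -
      have "\<bar>F0 z\<bar> = F0 z" unfolding F0_def by (intro abs_of_nonneg sum_nonneg) simp
      also have "\<dots> \<le> (\<Sum>a\<in>(UNIV::'a set). (\<bar>B\<bar> + R)\<^sup>2)"
        unfolding F0_def
      proof (rule sum_mono)
        fix a
        have "\<bar>mu a (obsX z) - cf a (obsX z)\<bar>\<^sup>2 \<le> (\<bar>B\<bar> + R)\<^sup>2" by (rule power_mono[OF mc]) simp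
        then show "(mu a (obsX z) - cf a (obsX z))\<^sup>2 \<le> (\<bar>B\<bar> + R)\<^sup>2" by simp
      qed
      finally show ?thesis by (simp add: N_def)
    qed
    have t2: "\<bar>2 * (mu a (obsX z) - cf a (obsX z)) * Rf a z\<bar> \<le> 2 * (\<bar>B\<bar> + R) * ((\<bar>obsY z\<bar> + \<bar>B\<bar>) / \<epsilon>)" for a
      unfolding abs_mult using mc Rf_bnd[OF elim, of a] R(1) by (intro mult_mono) auto
    have "\<bar>\<Sum>a\<in>UNIV. 2 * (mu a (obsX z) - cf a (obsX z)) * Rf a z\<bar> \<le> (\<Sum>a\<in>UNIV. \<bar>2 * (mu a (obsX z) - cf a (obsX z)) * Rf a z\<bar>)"
      by (rule sum_abs)
    also have "\<dots> \<le> (\<Sum>a\<in>(UNIV::'a set). 2 * (\<bar>B\<bar> + R) * ((\<bar>obsY z\<bar> + \<bar>B\<bar>) / \<epsilon>))"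
      by (rule sum_mono) (rule t2)
    also have "\<dots> = N * (2 * (\<bar>B\<bar> + R) * \<bar>B\<bar> / \<epsilon>) + K1 * \<bar>obsY z\<bar>"
      by (simp add: N_def K1_def algebra_simps add_divide_distrib)
    finally have t3: "\<bar>\<Sum>a\<in>UNIV. 2 * (mu a (obsX z) - cf a (obsX z)) * Rf a z\<bar> \<le> N * (2 * (\<bar>B\<bar> + R) * \<bar>B\<bar> / \<epsilon>) + K1 * \<bar>obsY z\<bar>" .
    show ?case unfolding varphiC_eq K0_def
      using abs_triangle_ineq[of "F0 z" "\<Sum>a\<in>UNIV. 2 * (mu a (obsX z) - cf a (obsX z)) * Rf a z"] t1 t3 by linarith
  qed
  moreover have "0 \<le> K1" using R eps by (simp add: K1_def N_def)
  ultimately show ?thesis by blast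
qed

lemma varphiC_L2: "integrable P (\<lambda>z. (varphiC pi mu Cs z)\<^sup>2)"
proof -
  obtain K0 K1 where K: "0 \<le> K1" "AE z in P. \<bar>varphiC pi mu Cs z\<bar> \<le> K0 + K1 * \<bar>obsY z\<bar>"
    using varphiC_bnd by blast
  show ?thesis
  proof (rule Bochner_Integration.integrable_bound[where f="\<lambda>z. 2 * K0\<^sup>2 + 2 * K1\<^sup>2 * (obsY z)\<^sup>2"])
    show "integrable P (\<lambda>z. 2 * K0\<^sup>2 + 2 * K1\<^sup>2 * (obsY z)\<^sup>2)" using Y_L2 by simp
    show "(\<lambda>z. (varphiC pi mu Cs z)\<^sup>2) \<in> borel_measurable P" by measurable
    show "AE z in P. norm ((varphiC pi mu Cs z)\<^sup>2) \<le> norm (2 * K0\<^sup>2 + 2 * K1\<^sup>2 * (obsY z)\<^sup>2)"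
      using K(2)
    proof eventually_elim
      case (elim z)
      define y where "y = K1 * \<bar>obsY z\<bar>"
      have "\<bar>varphiC pi mu Cs z\<bar> \<le> \<bar>K0 + y\<bar>" using elim by (simp add: y_def)
      then have "(varphiC pi mu Cs z)\<^sup>2 \<le> (K0 + y)\<^sup>2" by (simp add: abs_le_square_iff)
      also have "\<dots> \<le> (K0 + y)\<^sup>2 + (K0 - y)\<^sup>2" by simp
      also have "\<dots> = 2 * K0\<^sup>2 + 2 * K1\<^sup>2 * (obsY z)\<^sup>2"
        by (simp add: y_def power2_eq_square algebra_simps)
      finally show ?case by simp
    qed
  qed
qed

lemma varphiC_int: "integrable P (varphiC pi mu Cs)"
  by (rule square_integrable_imp_integrable[OF varphiC_meas varphiC_L2])

lemma eif_basic:
  defines "phi \<equiv> (\<lambda>z. varphiC pi mu Cs z - (\<integral>w. varphiC pi mu Cs w \<partial>P))"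
  shows "phi \<in> borel_measurable P" "integrable P (\<lambda>z. (phi z)\<^sup>2)" "(\<integral>z. phi z \<partial>P) = 0"
proof -
  define c where "c = (\<integral>w. varphiC pi mu Cs w \<partial>P)"
  have phi: "phi = (\<lambda>z. varphiC pi mu Cs z - c)" unfolding phi_def c_def ..
  show "phi \<in> borel_measurable P" unfolding phi by measurable
  have "(\<lambda>z. (varphiC pi mu Cs z - c)\<^sup>2) = (\<lambda>z. (varphiC pi mu Cs z)\<^sup>2 - 2 * c * varphiC pi mu Cs z + c\<^sup>2)"
    by (simp add: power2_eq_square algebra_simps)
  then show "integrable P (\<lambda>z. (phi z)\<^sup>2)" unfolding phi using varphiC_L2 varphiC_int by simp
  show "(\<integral>z. phi z \<partial>P) = 0" unfolding phi using varphiC_int prob_space by (simp add: c_def)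
qed

end


context eif_s begin

lemma F0_eq: "F0 z = Fv (vecf mu (obsX z))"
  by (simp add: F0_Fv Fv_def)

lemma per_a:
  shows "integrable P (\<lambda>z. 2 * (mu a (obsX z) - cf a (obsX z)) * Rf a z * s z)"
    "integrable P (\<lambda>z. 2 * (mu a (obsX z) - cf a (obsX z)) * kf a (obsX z))"
    "(\<integral>z. 2 * (mu a (obsX z) - cf a (obsX z)) * Rf a z * s z \<partial>P) =
     (\<integral>z. 2 * (mu a (obsX z) - cf a (obsX z)) * kf a (obsX z) \<partial>P)"
proof -
  obtain R where R: "0 \<le> R" "\<And>a x. \<bar>cf a x\<bar> \<le> R" using proj_R by blast
  define psi where "psi y = indicator {a} (fst y) * (2 * (mu a (snd y) - cf a (snd y)) / pi a (snd y))" for y :: "'a \<times> 'x"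
  define psim where "psim y = psi y * mu (fst y) (snd y)" for y
  have psi_meas[measurable]: "psi \<in> borel_measurable SAX" unfolding psi_def[abs_def] by measurable
  have mfs: "(\<lambda>y. mu (fst y) (snd y)) \<in> borel_measurable SAX" by (rule meas_fun_AX) simp
  have psim_meas[measurable]: "psim \<in> borel_measurable SAX" unfolding psim_def[abs_def] using mfs by measurable
  have mc: "\<bar>mu a (obsX z) - cf a (obsX z)\<bar> \<le> \<bar>B\<bar> + R" if "\<forall>a. \<bar>mu a (obsX z)\<bar> \<le> B \<and> \<epsilon> \<le> pi a (obsX z)" for z
  proof -
    have "\<bar>mu a (obsX z)\<bar> \<le> \<bar>B\<bar>" using that by (meson abs_ge_self order.trans)
    then show ?thesis using R(2)[of a "obsX z"] by (simp add: abs_le_iff)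
  qed
  have psi_bnd: "AE z in P. \<bar>psi (snd z)\<bar> \<le> 2 * (\<bar>B\<bar> + R) / \<epsilon>"
    using good_AE
  proof eventually_elim
    case (elim z)
    show ?case
    proof (cases "obsA z = a")
      case True
      have p: "\<epsilon> \<le> pi a (obsX z)" using elim by auto
      have ps: "psi (snd z) = 2 * (mu a (obsX z) - cf a (obsX z)) / pi a (obsX z)"
        using True by (simp add: psi_def snd_eq)
      have "\<bar>psi (snd z)\<bar> = 2 * \<bar>mu a (obsX z) - cf a (obsX z)\<bar> / pi a (obsX z)"
        unfolding ps abs_divide abs_mult using p eps by simp
      also have "\<dots> \<le> 2 * \<bar>mu a (obsX z) - cf a (obsX z)\<bar> / \<epsilon>"
        using p eps by (intro divide_left_mono) auto
      also have "\<dots> \<le> 2 * (\<bar>B\<bar> + R) / \<epsilon>"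
        using mc[OF elim] eps by (intro divide_right_mono) auto
      finally show ?thesis .
    next
      case False then show ?thesis using eps R by (simp add: psi_def snd_eq)
    qed
  qed
  have psim_bnd: "AE z in P. \<bar>psim (snd z)\<bar> \<le> 2 * (\<bar>B\<bar> + R) / \<epsilon> * \<bar>B\<bar>"
    using psi_bnd good_AE
  proof eventually_elim
    case (elim z)
    have "\<bar>mu (obsA z) (obsX z)\<bar> \<le> \<bar>B\<bar>" using elim(2) by (meson abs_ge_self order.trans)
    then show ?case unfolding psim_def abs_mult using elim(1) by (intro mult_mono) (auto simp: snd_eq)
  qed
  have psiz: "(\<lambda>z. psi (snd z)) \<in> borel_measurable P" by measurable
  have psimz: "(\<lambda>z. psim (snd z)) \<in> borel_measurable P" by measurable
  have i1: "integrable P (\<lambda>z. obsY z * s z * psi (snd z))"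
    by (rule integrable_mult_bdd_AE[OF Ys_int psiz psi_bnd])
  have i2: "integrable P (\<lambda>z. s z * psim (snd z))"
    by (rule integrable_mult_bdd_AE[OF s_int psimz psim_bnd])
  have j1: "integrable P (\<lambda>z. Hc (snd z) * psi (snd z))" and e1: "(\<integral>z. obsY z * s z * psi (snd z) \<partial>P) = (\<integral>z. Hc (snd z) * psi (snd z) \<partial>P)"
    using Hc_eq[OF psi_meas i1] by auto
  have j2: "integrable P (\<lambda>z. Gc (snd z) * psim (snd z))" and e2: "(\<integral>z. s z * psim (snd z) \<partial>P) = (\<integral>z. Gc (snd z) * psim (snd z) \<partial>P)"
    using Gc_eq[OF psim_meas i2] by auto
  have pw1: "2 * (mu a (obsX z) - cf a (obsX z)) * Rf a z * s z = obsY z * s z * psi (snd z) - s z * psim (snd z)" for z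
    by (cases "obsA z = a") (simp_all add: Rf_def psi_def psim_def snd_eq divide_inverse algebra_simps)
  define f where "f x = 2 * (mu a x - cf a x) / pi a x * kf a x" for x
  have f_meas[measurable]: "f \<in> borel_measurable borel" unfolding f_def[abs_def] by measurable
  have pw2: "Hc (snd z) * psi (snd z) - Gc (snd z) * psim (snd z) = indicator {a} (obsA z) * f (obsX z)" for z
    by (cases "obsA z = a") (simp_all add: psi_def psim_def snd_eq f_def kf_def divide_inverse algebra_simps)
  show int1: "integrable P (\<lambda>z. 2 * (mu a (obsX z) - cf a (obsX z)) * Rf a z * s z)"
    unfolding pw1 using i1 i2 by simp
  have int_if: "integrable P (\<lambda>z. indicator {a} (obsA z) * f (obsX z))"
    unfolding pw2[symmetric] using j1 j2 by simp
  have kfi: "integrable P (\<lambda>z. kf a (obsX z))"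
    by (rule square_integrable_imp_integrable[OF _ kf_sq_int]) measurable
  have mcz: "(\<lambda>z. 2 * (mu a (obsX z) - cf a (obsX z))) \<in> borel_measurable P" by measurable
  have "integrable P (\<lambda>z. kf a (obsX z) * (2 * (mu a (obsX z) - cf a (obsX z))))"
  proof (rule integrable_mult_bdd_AE[OF kfi mcz, where c="2 * (\<bar>B\<bar> + R)"])
    show "AE z in P. \<bar>2 * (mu a (obsX z) - cf a (obsX z))\<bar> \<le> 2 * (\<bar>B\<bar> + R)"
      using good_AE
    proof eventually_elim
      case (elim z)
      have "\<bar>2 * (mu a (obsX z) - cf a (obsX z))\<bar> = 2 * \<bar>mu a (obsX z) - cf a (obsX z)\<bar>"
        unfolding abs_mult by simp
      then show ?case using mc[OF elim] by simp
    qed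
  qed
  then show int2: "integrable P (\<lambda>z. 2 * (mu a (obsX z) - cf a (obsX z)) * kf a (obsX z))"
    by (simp add: mult.commute)
  have "(\<integral>z. 2 * (mu a (obsX z) - cf a (obsX z)) * Rf a z * s z \<partial>P)
      = (\<integral>z. obsY z * s z * psi (snd z) \<partial>P) - (\<integral>z. s z * psim (snd z) \<partial>P)"
    unfolding pw1 using i1 i2 by simp
  also have "\<dots> = (\<integral>z. Hc (snd z) * psi (snd z) \<partial>P) - (\<integral>z. Gc (snd z) * psim (snd z) \<partial>P)"
    using e1 e2 by simp
  also have "\<dots> = (\<integral>z. indicator {a} (obsA z) * f (obsX z) \<partial>P)"
    unfolding pw2[symmetric] using j1 j2 by simp
  also have "\<dots> = (\<integral>z. pi a (obsX z) * f (obsX z) \<partial>P)"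
    by (rule prop_fun(2)[OF f_meas int_if])
  also have "\<dots> = (\<integral>z. 2 * (mu a (obsX z) - cf a (obsX z)) * kf a (obsX z) \<partial>P)"
  proof (rule integral_cong_AE)
    show "AE z in P. pi a (obsX z) * f (obsX z) = 2 * (mu a (obsX z) - cf a (obsX z)) * kf a (obsX z)"
      using pos[rule_format, of a]
    proof eventually_elim
      case (elim z)
      then have "pi a (obsX z) \<noteq> 0" using eps by linarith
      then show ?case by (simp add: f_def)
    qed
  qed measurable
  finally show "(\<integral>z. 2 * (mu a (obsX z) - cf a (obsX z)) * Rf a z * s z \<partial>P) =
     (\<integral>z. 2 * (mu a (obsX z) - cf a (obsX z)) * kf a (obsX z) \<partial>P)" .
qed

lemma ident: "(\<integral>z. Dz z \<partial>P) = (\<integral>z. (varphiC pi mu Cs z - (\<integral>w. varphiC pi mu Cs w \<partial>P)) * s z \<partial>P)"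
proof -
  define c where "c = (\<integral>w. varphiC pi mu Cs w \<partial>P)"
  have F0s: "integrable P (\<lambda>z. F0 z * s z)"
    using integrable_mult_bdd_AE[OF Fv0_int s_meas, where c=Ms] s_bnd by (simp add: F0_eq)
  have vs: "integrable P (\<lambda>z. varphiC pi mu Cs z * s z)"
    using integrable_mult_bdd_AE[OF varphiC_int s_meas, where c=Ms] s_bnd by simp
  have "(\<integral>z. (varphiC pi mu Cs z - c) * s z \<partial>P) = (\<integral>z. varphiC pi mu Cs z * s z - c * s z \<partial>P)"
    by (simp add: algebra_simps)
  also have "\<dots> = (\<integral>z. varphiC pi mu Cs z * s z \<partial>P)"
    using vs s_int s_mean by simp
  also have "\<dots> = (\<integral>z. F0 z * s z + (\<Sum>a\<in>UNIV. 2 * (mu a (obsX z) - cf a (obsX z)) * Rf a z * s z) \<partial>P)"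
    by (simp add: varphiC_eq algebra_simps sum_distrib_right sum_distrib_left)
  also have "\<dots> = (\<integral>z. F0 z * s z \<partial>P) + (\<Sum>a\<in>UNIV. (\<integral>z. 2 * (mu a (obsX z) - cf a (obsX z)) * Rf a z * s z \<partial>P))"
    using F0s per_a(1) by simp
  also have "\<dots> = (\<integral>z. F0 z * s z \<partial>P) + (\<Sum>a\<in>UNIV. (\<integral>z. 2 * (mu a (obsX z) - cf a (obsX z)) * kf a (obsX z) \<partial>P))"
    using per_a(3) by simp
  also have "\<dots> = (\<integral>z. F0 z * s z + (\<Sum>a\<in>UNIV. 2 * (mu a (obsX z) - cf a (obsX z)) * kf a (obsX z)) \<partial>P)"
    using F0s per_a(2) by simp
  also have "\<dots> = (\<integral>z. Dz z \<partial>P)"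
    by (simp add: Dz_def F0_eq cf_def)
  finally show ?thesis by (simp add: c_def)
qed

end


lemma margin_meas:
  fixes C :: "(real^'a::finite) set"
  assumes C: "finite C"
  shows "margin_nbhd C t \<in> sets borel"
proof -
  have dm[measurable]: "(\<lambda>x::real^'a. dist x c) \<in> borel_measurable borel" for c
    by (intro borel_measurable_continuous_onI continuous_intros)
  have mm[measurable]: "(\<lambda>x::real^'a. Min ((\<lambda>c'. dist x c') ` (C - {c}))) \<in> borel_measurable borel" for c
    using C by (intro borel_measurable_Min) (auto intro: dm)
  have p1: "Measurable.pred borel (\<lambda>x::real^'a. \<forall>c'\<in>C. dist x c \<le> dist x c')" for c
    using C by measurable
  have p2: "Measurable.pred borel (\<lambda>x::real^'a. \<bar>dist x c - Min ((\<lambda>c'. dist x c') ` (C - {c}))\<bar> \<le> t)" for c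
    by measurable
  have "Measurable.pred borel (\<lambda>x. \<exists>c\<in>C. (\<forall>c'\<in>C. dist x c \<le> dist x c') \<and> C - {c} \<noteq> {} \<and>
      \<bar>dist x c - Min ((\<lambda>c'. dist x c') ` (C - {c}))\<bar> \<le> t)"
    using C p1 p2 by (intro pred_intros_finite pred_intros_logic) auto
  then show ?thesis unfolding margin_nbhd_def by (simp add: pred_def)
qed

theorem lemma4:
  fixes P :: "(real \<times> 'a::finite \<times> 'x::euclidean_space) measure"
    and mu pi :: "'a \<Rightarrow> 'x \<Rightarrow> real"
    and k :: nat and \<kappa> \<alpha> B \<epsilon> :: real
    and Q :: "'w measure" and muhat :: "nat \<Rightarrow> 'w \<Rightarrow> 'a \<Rightarrow> 'x \<Rightarrow> real"
    and Cs :: "(real^'a) set"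
  assumes P: "prob_space P"
    and sets_P: "sets P = sets (borel \<Otimes>\<^sub>M (count_space UNIV \<Otimes>\<^sub>M borel))"
    and Y_L2: "integrable P (\<lambda>z. (obsY z)\<^sup>2)"
    and propens: "is_propensity P pi"
    and regr: "is_regression P mu"
    and pos: "\<epsilon> > 0" "\<forall>a. AE z in P. pi a (obsX z) \<ge> \<epsilon>"
    and A1_mu: "AE z in P. \<forall>a. \<bar>mu a (obsX z)\<bar> \<le> B"
    and Q: "prob_space Q"
    and A1_muhat: "\<forall>n. AE \<omega> in Q. \<forall>a x. \<bar>muhat n \<omega> a x\<bar> \<le> B"
    and A2: "\<forall>e>0. \<forall>\<delta>>0. eventually (\<lambda>n. \<exists>E\<in>sets Q.
               {\<omega>\<in>space Q. \<exists>a x. \<bar>muhat n \<omega> a x - mu a x\<bar> > e} \<subseteq> E \<and> measure Q E \<le> \<delta>)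
             sequentially"
    and margin: "\<kappa> > 0" "\<alpha> > 0" "margin_condition P mu k \<kappa> \<alpha>"
    and optC: "Cs \<in> opt_codebooks P mu k"
  shows "eif_nonpar P (\<lambda>R. psi R Cs) (\<lambda>z. varphiC pi mu Cs z - (\<integral>w. varphiC pi mu Cs w \<partial>P))"
proof -
  have finC: "finite Cs" using optC unfolding opt_codebooks_def codebooks_def by blast
  interpret P: prob_space P by (rule P)
  have spP: "space P = UNIV"
    using sets_eq_imp_space_eq[OF sets_P] by (simp add: space_pair_measure)
  have mX: "obsX \<in> measurable P borel"
    unfolding measurable_cong_sets[OF sets_P refl] obsX_def[abs_def] by measurable
  have mu_m: "mu a \<in> borel_measurable borel" for a using regr unfolding is_regression_def by blast
  have ties: "AE z in P. vecf mu (obsX z) \<notin> margin_nbhd Cs 0"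
  proof -
    obtain K where K: "\<And>t. 0 \<le> t \<Longrightarrow> t \<le> \<kappa> \<Longrightarrow> \<forall>C\<in>opt_codebooks P mu k.
        measure P {z\<in>space P. vecf mu (obsX z) \<in> margin_nbhd C t} \<le> K * t powr \<alpha>"
      using margin(3) unfolding margin_condition_def by blast
    have "measure P {z\<in>space P. vecf mu (obsX z) \<in> margin_nbhd Cs 0} \<le> K * 0 powr \<alpha>"
      using K[of 0] margin(1) optC by auto
    then have m0: "measure P {z\<in>space P. vecf mu (obsX z) \<in> margin_nbhd Cs 0} = 0"
      using measure_nonneg[of P] by (simp add: antisym)
    have vm: "(\<lambda>z. vecf mu (obsX z)) \<in> borel_measurable P"
      using measurable_compose[OF mX vecf_meas[where m=mu, OF mu_m]] by (simp add: comp_def)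
    have S: "{z\<in>space P. vecf mu (obsX z) \<in> margin_nbhd Cs 0} \<in> sets P"
      using measurable_sets[OF vm margin_meas[OF finC, of 0]] by (simp add: vimage_def Int_def conj_commute)
    show ?thesis
      by (rule AE_I[OF _ _ S]) (use m0 S P.emeasure_eq_measure in auto)
  qed
  interpret E: eif_setup P mu pi \<epsilon> B Cs
    unfolding eif_setup_def eif_setup_axioms_def
    using P sets_P Y_L2 propens regr pos A1_mu finC ties by blast
  show ?thesis
    unfolding eif_nonpar_def
  proof (intro conjI allI impI)
    show "(\<lambda>z. varphiC pi mu Cs z - (\<integral>w. varphiC pi mu Cs w \<partial>P)) \<in> borel_measurable P"
      by (rule E.eif_basic(1))
    show "integrable P (\<lambda>z. (varphiC pi mu Cs z - (\<integral>w. varphiC pi mu Cs w \<partial>P))\<^sup>2)"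
      by (rule E.eif_basic(2))
    show "(\<integral>z. varphiC pi mu Cs z - (\<integral>w. varphiC pi mu Cs w \<partial>P) \<partial>P) = 0"
      by (rule E.eif_basic(3))
  next
    fix s :: "real \<times> 'a \<times> 'x \<Rightarrow> real" assume s: "s \<in> borel_measurable P \<and> (\<exists>M. \<forall>z\<in>space P. \<bar>s z\<bar> \<le> M) \<and> (\<integral>z. s z \<partial>P) = 0"
    then obtain M0 where M0: "\<forall>z\<in>space P. \<bar>s z\<bar> \<le> M0" by blast
    define Ms where "Ms = max M0 1"
    have sb: "\<And>z. \<bar>s z\<bar> \<le> Ms" using M0 spP unfolding Ms_def by (metis UNIV_I max.coboundedI1)
    interpret S: eif_s P mu pi \<epsilon> B Cs s Ms
      unfolding eif_s_def eif_s_axioms_def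
      using E.eif_setup_axioms s sb by (auto simp: Ms_def)
    show "((\<lambda>t. psi (density P (\<lambda>z. ennreal (1 + t * s z))) Cs) has_real_derivative
           (\<integral>z. (varphiC pi mu Cs z - (\<integral>w. varphiC pi mu Cs w \<partial>P)) * s z \<partial>P)) (at 0)"
      using S.psi_deriv S.ident by simp
  qed
qed


end
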